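(* Let $1 \le r \le n/2$ be integers and let $A$ be the adjacency matrix of the subgraph of the Hamming cube $\{0,1\}^n$ induced by $S(n,r-1)\cup S(n,r)$. Then: (i) For each $0 \le t \le r-1$, $A$ has a pair of eigenvalues $\pm\gamma_t$, where $\gamma_t = \sqrt{(r-t)(n-r-t+1)}$, each of multiplicity $\binom{n}{t}-\binom{n}{t-1}$ (with $\binom{n}{-1}:=0$). In addition $A$ has eigenvalue $0$ with multiplicity $\binom{n}{r}-\binom{n}{r-1}$. (ii) Given $0\le t\le r-1$ and $\lambda\in\{-\gamma_t,\gamma_t\}$, the eigenspace $W_t(\lambda)$ of $A$ corresponding to this pair $(t,\lambda)$ is described as follows: for $f \in W_t(\lambda)$ with restrictions $f_{r-1}, f_r$ to $S(n,r-1)$ and $S(n,r)$, the function $f_{r-1}$ can be chosen arbitrarily in the $t$-th eigenspace $V_t$ of $S(n,r-1)$, in which case $f_r$ is determined by $f_r(x) = \frac{1}{\lambda}\sum_{|y|=r-1,\ y\subset x} f_{r-1}(y)$; furthermore $f_r$ lies in the $t$-th eigenspace $V_t$ of $S(n,r)$. (iii) The eigenspace $W(0)$ corresponding to the eigenvalue $0$ contains the functions which vanish on $S(n,r-1)$ and whose restriction to $S(n,r)$ lies in the $r$-th eigenspace $V_r$ of $S(n,r)$.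
   Context: $\{0,1\}^n$ is the Hamming cube (vertices adjacent iff Hamming distance $1$); points are identified with subsets of $\{1,\dots,n\}$, and $|x|$ is the weight. $S(n,i)=\{x:|x|=i\}$ with inner product $\langle f,g\rangle=\sum_{x\in S(n,i)}f(x)g(x)$. For $|z|\le i$, $g_z$ on $S(n,i)$ is $1$ at $x$ if $z\subseteq x$ and $0$ otherwise; $U_j=\mathrm{span}\{g_z:|z|\le j\}$; the eigenspaces of $S(n,i)$ are $V_0=U_0$ (constants) and $V_j=U_j\cap U_{j-1}^\perp$ for $1\le j\le i$. *)

theory Defs
  imports Complex_Main "HOL-Library.Function_Algebras"
begin

text \<open>Points of the Hamming cube {0,1}^n are subsets of {1..n}.
  Real functions on a finite vertex set are modelled as functions
  nat set => real that vanish outside that set.\<close>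

definition layer :: "nat \<Rightarrow> nat \<Rightarrow> nat set set"  (\<open>S'(_,_')\<close>) where
  "layer n i = {x. x \<subseteq> {1..n} \<and> card x = i}"

definition cube_adj :: "nat set \<Rightarrow> nat set \<Rightarrow> bool" where
  "cube_adj x y \<longleftrightarrow> card ((x - y) \<union> (y - x)) = 1"

definition fscale :: "real \<Rightarrow> ('a \<Rightarrow> real) \<Rightarrow> ('a \<Rightarrow> real)" where
  "fscale c f = (\<lambda>x. c * f x)"

lemma vector_space_fscale: "vector_space (fscale :: real \<Rightarrow> ('a \<Rightarrow> real) \<Rightarrow> _)"
  by unfold_locales (auto simp: fscale_def algebra_simps plus_fun_def)

abbreviation fspan :: "('a \<Rightarrow> real) set \<Rightarrow> ('a \<Rightarrow> real) set" where
  "fspan \<equiv> module.span fscale"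

abbreviation fdim :: "('a \<Rightarrow> real) set \<Rightarrow> nat" where
  "fdim \<equiv> vector_space.dim fscale"

definition funs_on :: "'a set \<Rightarrow> ('a \<Rightarrow> real) set" where
  "funs_on X = {f. \<forall>x. x \<notin> X \<longrightarrow> f x = 0}"

definition restr :: "('a \<Rightarrow> real) \<Rightarrow> 'a set \<Rightarrow> ('a \<Rightarrow> real)" where
  "restr f X = (\<lambda>x. if x \<in> X then f x else 0)"

definition lay_inner :: "nat \<Rightarrow> nat \<Rightarrow> (nat set \<Rightarrow> real) \<Rightarrow> (nat set \<Rightarrow> real) \<Rightarrow> real" where
  "lay_inner n i f g = (\<Sum>x\<in>layer n i. f x * g x)"

definition gz :: "nat \<Rightarrow> nat \<Rightarrow> nat set \<Rightarrow> (nat set \<Rightarrow> real)" where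
  "gz n i z = (\<lambda>x. if x \<in> layer n i \<and> z \<subseteq> x then 1 else 0)"

definition Usp :: "nat \<Rightarrow> nat \<Rightarrow> nat \<Rightarrow> (nat set \<Rightarrow> real) set" where
  "Usp n i j = fspan {gz n i z | z. z \<subseteq> {1..n} \<and> card z \<le> j}"

definition orth_compl :: "nat \<Rightarrow> nat \<Rightarrow> (nat set \<Rightarrow> real) set \<Rightarrow> (nat set \<Rightarrow> real) set" where
  "orth_compl n i U = {f \<in> funs_on (layer n i). \<forall>g\<in>U. lay_inner n i f g = 0}"

text \<open>Eigenspaces V_j of S(n,i): V_0 = U_0, V_j = U_j \<inter> U_{j-1}^\<perp>.\<close>
definition Vsp :: "nat \<Rightarrow> nat \<Rightarrow> nat \<Rightarrow> (nat set \<Rightarrow> real) set" where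
  "Vsp n i j = (if j = 0 then Usp n i 0 else Usp n i j \<inter> orth_compl n i (Usp n i (j - 1)))"

definition adj_op :: "nat set set \<Rightarrow> (nat set \<Rightarrow> real) \<Rightarrow> (nat set \<Rightarrow> real)" where
  "adj_op X f = (\<lambda>x. if x \<in> X then (\<Sum>y\<in>{y\<in>X. cube_adj x y}. f y) else 0)"

definition eigsp :: "nat set set \<Rightarrow> real \<Rightarrow> (nat set \<Rightarrow> real) set" where
  "eigsp X lam = {f \<in> funs_on X. adj_op X f = fscale lam f}"

end

theory Submission
  imports Defs
begin

interpretation fs: vector_space "fscale :: real \<Rightarrow> ('a \<Rightarrow> real) \<Rightarrow> _"
  by (rule vector_space_fscale)

lemma fscale_apply[simp]: "fscale c f x = c * f x"
  by (simp add: fscale_def)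

lemma fscale_eq: "fscale c f = (\<lambda>x. c * f x)"
  by (simp add: fscale_def)

lemma finite_layer[simp]: "finite (layer n i)"
  unfolding layer_def by (rule finite_subset[of _ "Pow {1..n}"]) auto

lemma card_layer: "card (layer n i) = n choose i"
  unfolding layer_def using n_subsets[of "{1..n}" i] by simp

lemma layer_iff: "x \<in> layer n i \<longleftrightarrow> x \<subseteq> {1..n} \<and> card x = i"
  by (simp add: layer_def)

lemma layer_finite_elem: "x \<in> layer n i \<Longrightarrow> finite x"
  unfolding layer_def using finite_subset by auto

lemma layer_disj: "i \<noteq> j \<Longrightarrow> x \<in> layer n i \<Longrightarrow> x \<notin> layer n j"
  by (simp add: layer_def)

lemma subspace_funs_on: "fs.subspace (funs_on X)"
  by (auto simp: fs.subspace_def funs_on_def)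

lemma funs_on_iff: "f \<in> funs_on X \<longleftrightarrow> (\<forall>x. x \<notin> X \<longrightarrow> f x = 0)"
  by (simp add: funs_on_def)

lemma gz_funs_on: "gz n i z \<in> funs_on (layer n i)"
  by (simp add: gz_def funs_on_def)

lemma gz_gens_finite: "finite {gz n i z | z. z \<subseteq> {1..n} \<and> card z \<le> j}"
proof -
  have "{gz n i z | z. z \<subseteq> {1..n} \<and> card z \<le> j} \<subseteq> gz n i ` Pow {1..n}" by auto
  then show ?thesis by (rule finite_subset) auto
qed

lemma Usp_funs_on: "Usp n i j \<subseteq> funs_on (layer n i)"
  unfolding Usp_def
  by (rule fs.span_minimal) (auto simp: gz_funs_on subspace_funs_on)

lemma subspace_Usp: "fs.subspace (Usp n i j)"
  unfolding Usp_def by simp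

lemma Usp_mono: "j \<le> k \<Longrightarrow> Usp n i j \<subseteq> Usp n i k"
  unfolding Usp_def by (rule fs.span_mono) auto

lemma gz_in_Usp: "z \<subseteq> {1..n} \<Longrightarrow> card z \<le> j \<Longrightarrow> gz n i z \<in> Usp n i j"
  unfolding Usp_def by (rule fs.span_base) auto

lemma lay_inner_sym: "lay_inner n i f g = lay_inner n i g f"
  by (simp add: lay_inner_def mult.commute)

lemma lay_inner_add_left: "lay_inner n i (f + h) g = lay_inner n i f g + lay_inner n i h g"
  by (simp add: lay_inner_def algebra_simps sum.distrib)

lemma lay_inner_add_right: "lay_inner n i g (f + h) = lay_inner n i g f + lay_inner n i g h"
  by (simp add: lay_inner_def algebra_simps sum.distrib)

lemma lay_inner_diff_left: "lay_inner n i (f - h) g = lay_inner n i f g - lay_inner n i h g"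
  by (simp add: lay_inner_def algebra_simps sum_subtractf)

lemma lay_inner_diff_right: "lay_inner n i g (f - h) = lay_inner n i g f - lay_inner n i g h"
  by (simp add: lay_inner_def algebra_simps sum_subtractf)

lemma lay_inner_scale_left: "lay_inner n i (fscale c f) g = c * lay_inner n i f g"
  by (simp add: lay_inner_def sum_distrib_left algebra_simps)

lemma lay_inner_scale_right: "lay_inner n i g (fscale c f) = c * lay_inner n i g f"
  by (simp add: lay_inner_def sum_distrib_left algebra_simps)

lemma lay_inner_zero_left[simp]: "lay_inner n i 0 g = 0"
  by (simp add: lay_inner_def)

lemma lay_inner_zero_right[simp]: "lay_inner n i g 0 = 0"
  by (simp add: lay_inner_def)

lemma lay_inner_self_eq0:
  assumes "f \<in> funs_on (layer n i)" "lay_inner n i f f = 0"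
  shows "f = 0"
proof
  fix x
  have "(\<Sum>x\<in>layer n i. f x * f x) = 0" using assms(2) by (simp add: lay_inner_def)
  then have "\<forall>x\<in>layer n i. f x * f x = 0"
    by (subst (asm) sum_nonneg_eq_0_iff) auto
  then show "f x = 0 x" using assms(1) by (cases "x \<in> layer n i") (auto simp: funs_on_def)
qed

lemma lay_inner_self_ge0: "lay_inner n i f f \<ge> 0"
  by (simp add: lay_inner_def sum_nonneg)

lemma orth_span:
  assumes "\<forall>g\<in>G. lay_inner n i f g = 0" "g \<in> fs.span G"
  shows "lay_inner n i f g = 0"
proof -
  have "fs.subspace {g. lay_inner n i f g = 0}"
    by (auto simp: fs.subspace_def lay_inner_add_right lay_inner_scale_right)
  then have "fs.span G \<subseteq> {g. lay_inner n i f g = 0}"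
    using assms(1) by (intro fs.span_minimal) auto
  then show ?thesis using assms(2) by auto
qed

lemma subspace_orth_compl: "fs.subspace (orth_compl n i U)"
  by (auto simp: fs.subspace_def orth_compl_def lay_inner_add_left lay_inner_scale_left
      intro!: fs.subspace_add fs.subspace_scale subspace_funs_on fs.subspace_0)

lemma subspace_Vsp: "fs.subspace (Vsp n i j)"
  unfolding Vsp_def by (simp add: fs.subspace_inter subspace_Usp subspace_orth_compl)

lemma Vsp_funs_on: "Vsp n i j \<subseteq> funs_on (layer n i)"
  unfolding Vsp_def using Usp_funs_on by auto


definition up :: "nat \<Rightarrow> nat \<Rightarrow> (nat set \<Rightarrow> real) \<Rightarrow> (nat set \<Rightarrow> real)" where
  "up n i f = (\<lambda>x. if x \<in> layer n (Suc i) then (\<Sum>y\<in>{y\<in>layer n i. y \<subseteq> x}. f y) else 0)"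

definition dn :: "nat \<Rightarrow> nat \<Rightarrow> (nat set \<Rightarrow> real) \<Rightarrow> (nat set \<Rightarrow> real)" where
  "dn n i g = (\<lambda>y. if y \<in> layer n i then (\<Sum>x\<in>{x\<in>layer n (Suc i). y \<subseteq> x}. g x) else 0)"

lemma up_funs_on: "up n i f \<in> funs_on (layer n (Suc i))"
  by (simp add: up_def funs_on_def)

lemma dn_funs_on: "dn n i f \<in> funs_on (layer n i)"
  by (simp add: dn_def funs_on_def)

lemma fs_module: "module (fscale :: real \<Rightarrow> ('a \<Rightarrow> real) \<Rightarrow> _)"
  by unfold_locales (auto simp: fscale_def algebra_simps)

lemma up_hom: "module_hom fscale fscale (up n i)"
  unfolding module_hom_iff
  by (intro conjI fs_module allI) (simp_all add: up_def fun_eq_iff sum.distrib sum_distrib_left)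

lemma dn_hom: "module_hom fscale fscale (dn n i)"
  unfolding module_hom_iff
  by (intro conjI fs_module allI) (simp_all add: dn_def fun_eq_iff sum.distrib sum_distrib_left)

lemma up_add: "up n i (f + g) = up n i f + up n i g"
  using module_hom.add[OF up_hom] .
lemma up_scale: "up n i (fscale c f) = fscale c (up n i f)"
  using module_hom.scale[OF up_hom] .
lemma up_diff: "up n i (f - g) = up n i f - up n i g"
  using module_hom.diff[OF up_hom] .
lemma up_zero[simp]: "up n i 0 = 0"
  using module_hom.zero[OF up_hom] .
lemma dn_add: "dn n i (f + g) = dn n i f + dn n i g"
  using module_hom.add[OF dn_hom] .
lemma dn_scale: "dn n i (fscale c f) = fscale c (dn n i f)"
  using module_hom.scale[OF dn_hom] .
lemma dn_diff: "dn n i (f - g) = dn n i f - dn n i g"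
  using module_hom.diff[OF dn_hom] .
lemma dn_zero[simp]: "dn n i 0 = 0"
  using module_hom.zero[OF dn_hom] .

lemma up_cong: "(\<And>y. y \<in> layer n i \<Longrightarrow> f y = g y) \<Longrightarrow> up n i f = up n i g"
  by (auto simp: up_def fun_eq_iff intro!: sum.cong)

lemma dn_cong: "(\<And>y. y \<in> layer n (Suc i) \<Longrightarrow> f y = g y) \<Longrightarrow> dn n i f = dn n i g"
  by (auto simp: dn_def fun_eq_iff intro!: sum.cong)

lemma double_sum_card:
  fixes g :: "'b \<Rightarrow> real"
  assumes "finite A" "finite B"
  shows "(\<Sum>a\<in>{a\<in>A. P a}. \<Sum>b\<in>{b\<in>B. Q a b}. g b) = (\<Sum>b\<in>B. g b * real (card {a\<in>A. P a \<and> Q a b}))"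
proof -
  have "(\<Sum>a\<in>{a\<in>A. P a}. \<Sum>b\<in>{b\<in>B. Q a b}. g b)
      = (\<Sum>a\<in>A. if P a then (\<Sum>b\<in>{b\<in>B. Q a b}. g b) else 0)"
    using assms(1) by (rule sum.inter_filter)
  also have "\<dots> = (\<Sum>a\<in>A. \<Sum>b\<in>B. if P a \<and> Q a b then g b else 0)"
  proof (rule sum.cong[OF refl])
    fix a
    show "(if P a then (\<Sum>b\<in>{b\<in>B. Q a b}. g b) else 0) = (\<Sum>b\<in>B. if P a \<and> Q a b then g b else 0)"
      using sum.inter_filter[OF assms(2), of g "\<lambda>b. Q a b"] by auto
  qed
  also have "\<dots> = (\<Sum>b\<in>B. \<Sum>a\<in>A. if P a \<and> Q a b then g b else 0)"
    by (rule sum.swap)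
  also have "\<dots> = (\<Sum>b\<in>B. g b * real (card {a\<in>A. P a \<and> Q a b}))"
  proof (rule sum.cong[OF refl])
    fix b
    have "(\<Sum>a\<in>A. if P a \<and> Q a b then g b else 0) = (\<Sum>a\<in>{a\<in>A. P a \<and> Q a b}. g b)"
      using sum.inter_filter[OF assms(1), of "\<lambda>_. g b" "\<lambda>a. P a \<and> Q a b"] by simp
    then show "(\<Sum>a\<in>A. if P a \<and> Q a b then g b else 0) = g b * real (card {a\<in>A. P a \<and> Q a b})"
      by simp
  qed
  finally show ?thesis .
qed

lemma up_adj: "lay_inner n (Suc i) (up n i f) g = lay_inner n i f (dn n i g)"
proof -
  have "lay_inner n (Suc i) (up n i f) g = (\<Sum>x\<in>layer n (Suc i). \<Sum>y\<in>layer n i. if y \<subseteq> x then f y * g x else 0)"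
    unfolding lay_inner_def
  proof (rule sum.cong[OF refl])
    fix x assume x: "x \<in> layer n (Suc i)"
    have "up n i f x * g x = (\<Sum>y\<in>{y\<in>layer n i. y \<subseteq> x}. f y * g x)"
      using x by (simp add: up_def sum_distrib_right)
    also have "\<dots> = (\<Sum>y\<in>layer n i. if y \<subseteq> x then f y * g x else 0)"
      by (rule sum.inter_filter) simp
    finally show "up n i f x * g x = (\<Sum>y\<in>layer n i. if y \<subseteq> x then f y * g x else 0)" .
  qed
  also have "\<dots> = (\<Sum>y\<in>layer n i. \<Sum>x\<in>layer n (Suc i). if y \<subseteq> x then f y * g x else 0)"
    by (rule sum.swap)
  also have "\<dots> = lay_inner n i f (dn n i g)"
    unfolding lay_inner_def
  proof (rule sum.cong[OF refl])
    fix y assume y: "y \<in> layer n i"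
    have "f y * dn n i g y = (\<Sum>x\<in>{x\<in>layer n (Suc i). y \<subseteq> x}. f y * g x)"
      using y by (simp add: dn_def sum_distrib_left)
    also have "\<dots> = (\<Sum>x\<in>layer n (Suc i). if y \<subseteq> x then f y * g x else 0)"
      by (rule sum.inter_filter) simp
    finally show "(\<Sum>x\<in>layer n (Suc i). if y \<subseteq> x then f y * g x else 0) = f y * dn n i g y" by simp
  qed
  finally show ?thesis .
qed

lemma up_set:
  assumes y: "y \<in> layer n i"
  shows "{x\<in>layer n (Suc i). y \<subseteq> x \<and> P x} = (\<lambda>a. insert a y) ` {a\<in>{1..n} - y. P (insert a y)}"
    and "inj_on (\<lambda>a. insert a y) ({1..n} - y)"
proof -
  have fy: "finite y" using layer_finite_elem[OF y] .
  show "{x\<in>layer n (Suc i). y \<subseteq> x \<and> P x} = (\<lambda>a. insert a y) ` {a\<in>{1..n} - y. P (insert a y)}"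
  proof (intro equalityI subsetI)
    fix x assume x: "x \<in> {x\<in>layer n (Suc i). y \<subseteq> x \<and> P x}"
    then have fx: "finite x" using layer_finite_elem by auto
    have "card (x - y) = 1" using x y fy by (simp add: card_Diff_subset layer_iff)
    then obtain a where a: "x - y = {a}" by (auto simp: card_Suc_eq)
    then have "x = insert a y" using x by auto
    then show "x \<in> (\<lambda>a. insert a y) ` {a\<in>{1..n} - y. P (insert a y)}"
      using x a by (auto simp: layer_iff)
  next
    fix x assume "x \<in> (\<lambda>a. insert a y) ` {a\<in>{1..n} - y. P (insert a y)}"
    then obtain a where "a \<in> {1..n}" "a \<notin> y" "P (insert a y)" "x = insert a y" by auto
    then show "x \<in> {x\<in>layer n (Suc i). y \<subseteq> x \<and> P x}" using y fy by (auto simp: layer_iff)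
  qed
  show "inj_on (\<lambda>a. insert a y) ({1..n} - y)"
    by (auto simp: inj_on_def)
qed

lemma down_set:
  assumes x: "x \<in> layer n (Suc i)"
  shows "{y\<in>layer n i. y \<subseteq> x \<and> P y} = (\<lambda>a. x - {a}) ` {a\<in>x. P (x - {a})}"
    and "inj_on (\<lambda>a. x - {a}) x"
proof -
  have fx: "finite x" using layer_finite_elem[OF x] .
  show "{y\<in>layer n i. y \<subseteq> x \<and> P y} = (\<lambda>a. x - {a}) ` {a\<in>x. P (x - {a})}"
  proof (intro equalityI subsetI)
    fix y assume y: "y \<in> {y\<in>layer n i. y \<subseteq> x \<and> P y}"
    have fy: "finite y" using y layer_finite_elem by auto
    have "card (x - y) = 1" using x y fy by (simp add: card_Diff_subset layer_iff)
    then obtain a where a: "x - y = {a}" by (auto simp: card_Suc_eq)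
    then have "y = x - {a}" using y by auto
    then show "y \<in> (\<lambda>a. x - {a}) ` {a\<in>x. P (x - {a})}"
      using y a by auto
  next
    fix y assume "y \<in> (\<lambda>a. x - {a}) ` {a\<in>x. P (x - {a})}"
    then obtain a where "a \<in> x" "P (x - {a})" "y = x - {a}" by auto
    then show "y \<in> {y\<in>layer n i. y \<subseteq> x \<and> P y}" using x fx by (auto simp: layer_iff)
  qed
  show "inj_on (\<lambda>a. x - {a}) x"
    by (auto simp: inj_on_def)
qed

lemma card_up_all:
  assumes y: "y \<in> layer n i"
  shows "card {x\<in>layer n (Suc i). y \<subseteq> x \<and> True} = n - i"
proof -
  have e: "{x\<in>layer n (Suc i). y \<subseteq> x \<and> True} = (\<lambda>a. insert a y) ` ({1..n} - y)"
    using up_set(1)[OF y, of "\<lambda>_. True"] by (simp only: simp_thms Collect_mem_eq)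
  have "card ((\<lambda>a. insert a y) ` ({1..n} - y)) = card ({1..n} - y)"
    by (rule card_image[OF up_set(2)[OF y]])
  also have "\<dots> = n - i" using y layer_finite_elem[OF y] by (simp add: layer_iff card_Diff_subset)
  finally show ?thesis using e by simp
qed

lemma card_down_all:
  assumes x: "x \<in> layer n (Suc i)"
  shows "card {y\<in>layer n i. y \<subseteq> x \<and> True} = Suc i"
proof -
  have e: "{y\<in>layer n i. y \<subseteq> x \<and> True} = (\<lambda>a. x - {a}) ` x"
    using down_set(1)[OF x, of "\<lambda>_. True"] by (simp only: simp_thms Collect_mem_eq)
  have "card ((\<lambda>a. x - {a}) ` x) = card x"
    by (rule card_image[OF down_set(2)[OF x]])
  also have "\<dots> = Suc i" using x by (simp add: layer_iff)
  finally show ?thesis using e by simp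
qed


lemma dn_at: "y \<in> layer n i \<Longrightarrow> dn n i g y = (\<Sum>x\<in>{x\<in>layer n (Suc i). y \<subseteq> x}. g x)"
  by (simp add: dn_def)

lemma up_at: "x \<in> layer n (Suc i) \<Longrightarrow> up n i f x = (\<Sum>y\<in>{y\<in>layer n i. y \<subseteq> x}. f y)"
  by (simp add: up_def)

lemma layer_card_le: "y \<in> layer n i \<Longrightarrow> i \<le> n"
  by (metis card_atLeastAtMost card_mono diff_Suc_1 finite_atLeastAtMost layer_iff)

lemma count_union:
  assumes y: "y \<in> layer n (Suc k)" and w: "w \<in> layer n (Suc k)" and ne: "w \<noteq> y"
  shows "card {x\<in>layer n (Suc (Suc k)). y \<subseteq> x \<and> w \<subseteq> x} = (if card (y \<union> w) = Suc (Suc k) then 1 else 0)"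
proof -
  have fy: "finite y" and fw: "finite w" using y w layer_finite_elem by auto
  have cy: "card y = Suc k" and cw: "card w = Suc k" using y w by (auto simp: layer_iff)
  have gt: "card (y \<union> w) > Suc k"
  proof -
    have "y \<subset> y \<union> w"
    proof
      show "y \<subseteq> y \<union> w" by auto
      show "y \<noteq> y \<union> w"
      proof
        assume "y = y \<union> w"
        then have "w \<subseteq> y" by auto
        then have "w = y" using card_subset_eq[OF fy] cy cw by auto
        then show False using ne by simp
      qed
    qed
    then show ?thesis using psubset_card_mono[of "y \<union> w" y] fy fw cy by auto
  qed
  show ?thesis
  proof (cases "card (y \<union> w) = Suc (Suc k)")
    case True
    have "{x\<in>layer n (Suc (Suc k)). y \<subseteq> x \<and> w \<subseteq> x} = {y \<union> w}"
    proof (intro equalityI subsetI)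
      fix x assume x: "x \<in> {x\<in>layer n (Suc (Suc k)). y \<subseteq> x \<and> w \<subseteq> x}"
      then have "finite x" "y \<union> w \<subseteq> x" "card x = Suc (Suc k)" using layer_finite_elem by (auto simp: layer_iff)
      then have "y \<union> w = x" using card_subset_eq[of x "y \<union> w"] True by simp
      then show "x \<in> {y \<union> w}" by simp
    next
      fix x assume "x \<in> {y \<union> w}"
      then show "x \<in> {x\<in>layer n (Suc (Suc k)). y \<subseteq> x \<and> w \<subseteq> x}" using y w True by (auto simp: layer_iff)
    qed
    then show ?thesis using True by simp
  next
    case False
    have "{x\<in>layer n (Suc (Suc k)). y \<subseteq> x \<and> w \<subseteq> x} = {}"
    proof (intro equalityI subsetI)
      fix x assume x: "x \<in> {x\<in>layer n (Suc (Suc k)). y \<subseteq> x \<and> w \<subseteq> x}"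
      then have "finite x" "y \<union> w \<subseteq> x" "card x = Suc (Suc k)" using layer_finite_elem by (auto simp: layer_iff)
      then have "card (y \<union> w) \<le> Suc (Suc k)" using card_mono by metis
      then show "x \<in> {}" using False gt by simp
    qed auto
    then show ?thesis using False by simp
  qed
qed

lemma count_inter:
  assumes y: "y \<in> layer n (Suc k)" and w: "w \<in> layer n (Suc k)" and ne: "w \<noteq> y"
  shows "card {v\<in>layer n k. v \<subseteq> y \<and> v \<subseteq> w} = (if card (y \<inter> w) = k then 1 else 0)"
proof -
  have fy: "finite y" and fw: "finite w" using y w layer_finite_elem by auto
  have cy: "card y = Suc k" and cw: "card w = Suc k" using y w by (auto simp: layer_iff)
  have lt: "card (y \<inter> w) < Suc k"
  proof -
    have "y \<inter> w \<subset> y"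
    proof
      show "y \<inter> w \<subseteq> y" by auto
      show "y \<inter> w \<noteq> y"
      proof
        assume "y \<inter> w = y"
        then have "y \<subseteq> w" by auto
        then have "w = y" using card_subset_eq[OF fw] cy cw by auto
        then show False using ne by simp
      qed
    qed
    then show ?thesis using psubset_card_mono[of y "y \<inter> w"] fy cy by auto
  qed
  show ?thesis
  proof (cases "card (y \<inter> w) = k")
    case True
    have "{v\<in>layer n k. v \<subseteq> y \<and> v \<subseteq> w} = {y \<inter> w}"
    proof (intro equalityI subsetI)
      fix v assume v: "v \<in> {v\<in>layer n k. v \<subseteq> y \<and> v \<subseteq> w}"
      then have "v \<subseteq> y \<inter> w" "card v = k" by (auto simp: layer_iff)
      then show "v \<in> {y \<inter> w}" using card_subset_eq[of "y \<inter> w" v] True fy by auto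
    next
      fix v assume "v \<in> {y \<inter> w}"
      then show "v \<in> {v\<in>layer n k. v \<subseteq> y \<and> v \<subseteq> w}" using y w True by (auto simp: layer_iff)
    qed
    then show ?thesis using True by simp
  next
    case False
    have "{v\<in>layer n k. v \<subseteq> y \<and> v \<subseteq> w} = {}"
    proof (intro equalityI subsetI)
      fix v assume v: "v \<in> {v\<in>layer n k. v \<subseteq> y \<and> v \<subseteq> w}"
      then have "v \<subseteq> y \<inter> w" "card v = k" by (auto simp: layer_iff)
      then have "k \<le> card (y \<inter> w)" using card_mono fy by (metis finite_Int)
      then show "v \<in> {}" using False lt by simp
    qed auto
    then show ?thesis using False by simp
  qed
qed

lemma count_diff:
  assumes y: "y \<in> layer n (Suc k)" and w: "w \<in> layer n (Suc k)"
  shows "real (card {x\<in>layer n (Suc (Suc k)). y \<subseteq> x \<and> w \<subseteq> x}) - real (card {v\<in>layer n k. v \<subseteq> y \<and> v \<subseteq> w})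
    = (if w = y then real n - 2 * real (Suc k) else 0)"
proof (cases "w = y")
  case True
  have "card {x\<in>layer n (Suc (Suc k)). y \<subseteq> x \<and> w \<subseteq> x} = n - Suc k"
    using card_up_all[OF y] True by simp
  moreover have "card {v\<in>layer n k. v \<subseteq> y \<and> v \<subseteq> w} = Suc k"
    using card_down_all[OF y] True by simp
  moreover have "Suc k \<le> n" using layer_card_le[OF y] .
  ultimately show ?thesis using True by (simp add: of_nat_diff)
next
  case False
  have fy: "finite y" and fw: "finite w" using y w layer_finite_elem by auto
  have "card (y \<union> w) + card (y \<inter> w) = 2 * Suc k"
    using card_Un_Int[OF fy fw] y w by (simp add: layer_iff)
  then show ?thesis using count_union[OF y w False] count_inter[OF y w False] False by auto
qed

lemma commute_step:
  assumes y: "y \<in> layer n (Suc k)"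
  shows "dn n (Suc k) (up n (Suc k) f) y = up n k (dn n k f) y + (real n - 2 * real (Suc k)) * f y"
proof -
  have "dn n (Suc k) (up n (Suc k) f) y
      = (\<Sum>x\<in>{x\<in>layer n (Suc (Suc k)). y \<subseteq> x}. \<Sum>w\<in>{w\<in>layer n (Suc k). w \<subseteq> x}. f w)"
    unfolding dn_at[OF y] by (rule sum.cong[OF refl]) (simp add: up_at)
  also have "\<dots> = (\<Sum>w\<in>layer n (Suc k). f w * real (card {x\<in>layer n (Suc (Suc k)). y \<subseteq> x \<and> w \<subseteq> x}))"
    by (rule double_sum_card) auto
  finally have L: "dn n (Suc k) (up n (Suc k) f) y = \<dots>" .
  have "up n k (dn n k f) y
      = (\<Sum>v\<in>{v\<in>layer n k. v \<subseteq> y}. \<Sum>w\<in>{w\<in>layer n (Suc k). v \<subseteq> w}. f w)"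
    unfolding up_at[OF y] by (rule sum.cong[OF refl]) (simp add: dn_at)
  also have "\<dots> = (\<Sum>w\<in>layer n (Suc k). f w * real (card {v\<in>layer n k. v \<subseteq> y \<and> v \<subseteq> w}))"
    by (rule double_sum_card) auto
  finally have R: "up n k (dn n k f) y = \<dots>" .
  have "dn n (Suc k) (up n (Suc k) f) y - up n k (dn n k f) y
     = (\<Sum>w\<in>layer n (Suc k). f w * (real (card {x\<in>layer n (Suc (Suc k)). y \<subseteq> x \<and> w \<subseteq> x})
          - real (card {v\<in>layer n k. v \<subseteq> y \<and> v \<subseteq> w})))"
    unfolding L R by (simp add: sum_subtractf algebra_simps)
  also have "\<dots> = (\<Sum>w\<in>layer n (Suc k). if w = y then f y * (real n - 2 * real (Suc k)) else 0)"
    by (rule sum.cong[OF refl]) (simp add: count_diff[OF y])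
  also have "\<dots> = f y * (real n - 2 * real (Suc k))"
    using y by simp
  finally show ?thesis by (simp add: algebra_simps)
qed

lemma layer0: "layer n 0 = {{}}"
proof (rule set_eqI)
  fix x :: "nat set"
  show "x \<in> layer n 0 \<longleftrightarrow> x \<in> {{}}"
  proof
    assume "x \<in> layer n 0"
    then have "x \<subseteq> {1..n}" "card x = 0" by (auto simp: layer_iff)
    then show "x \<in> {{}}" using finite_subset[of x "{1..n}"] by auto
  next
    assume "x \<in> {{}}"
    then show "x \<in> layer n 0" by (simp add: layer_iff)
  qed
qed

lemma commute_base:
  assumes y: "y \<in> layer n 0"
  shows "dn n 0 (up n 0 f) y = real n * f y"
proof -
  have y0: "y = {}" using y by (simp add: layer0)
  have "dn n 0 (up n 0 f) y
      = (\<Sum>x\<in>{x\<in>layer n (Suc 0). y \<subseteq> x}. \<Sum>w\<in>{w\<in>layer n 0. w \<subseteq> x}. f w)"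
    unfolding dn_at[OF y] by (rule sum.cong[OF refl]) (simp add: up_at)
  also have "\<dots> = (\<Sum>w\<in>layer n 0. f w * real (card {x\<in>layer n (Suc 0). y \<subseteq> x \<and> w \<subseteq> x}))"
    by (rule double_sum_card) auto
  also have "\<dots> = f {} * real (card {x\<in>layer n (Suc 0). {} \<subseteq> x \<and> True})"
    by (simp add: layer0 y0)
  also have "\<dots> = f {} * real n"
    using card_up_all[of "{}" n 0] by (simp add: layer0)
  finally show ?thesis using y0 by simp
qed


lemma sum_fun_apply: "(\<Sum>x\<in>A. h x) w = (\<Sum>x\<in>A. h x w)"
  by (induction A rule: infinite_finite_induct) auto

lemma sum_indicator_card:
  assumes "finite S"
  shows "(\<Sum>y\<in>S. if P y then (1::real) else 0) = real (card {y\<in>S. P y})"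
  using sum.inter_filter[OF assms, of "\<lambda>_. (1::real)" P, symmetric] by simp

lemma up_gz:
  assumes z: "z \<subseteq> {1..n}" and cz: "card z \<le> Suc i"
  shows "up n i (gz n i z) = fscale (real (Suc i) - real (card z)) (gz n (Suc i) z)"
proof (rule ext)
  fix x
  have fz: "finite z" using z finite_subset by blast
  show "up n i (gz n i z) x = fscale (real (Suc i) - real (card z)) (gz n (Suc i) z) x"
  proof (cases "x \<in> layer n (Suc i)")
    case False then show ?thesis by (simp add: up_def gz_def)
  next
    case x: True
    have fx: "finite x" using layer_finite_elem[OF x] .
    have "up n i (gz n i z) x = (\<Sum>y\<in>{y\<in>layer n i. y \<subseteq> x}. if z \<subseteq> y then 1 else 0)"
      using x by (auto simp: up_def gz_def intro!: sum.cong)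
    also have "\<dots> = real (card {y\<in>{y\<in>layer n i. y \<subseteq> x}. z \<subseteq> y})"
      by (rule sum_indicator_card) simp
    also have "{y\<in>{y\<in>layer n i. y \<subseteq> x}. z \<subseteq> y} = {y\<in>layer n i. y \<subseteq> x \<and> z \<subseteq> y}" by auto
    also have "\<dots> = (\<lambda>a. x - {a}) ` {a\<in>x. z \<subseteq> x - {a}}" by (rule down_set(1)[OF x])
    finally have e: "up n i (gz n i z) x = real (card ((\<lambda>a. x - {a}) ` {a\<in>x. z \<subseteq> x - {a}}))" .
    show ?thesis
    proof (cases "z \<subseteq> x")
      case True
      have "{a\<in>x. z \<subseteq> x - {a}} = x - z" using True by auto
      moreover have "card ((\<lambda>a. x - {a}) ` (x - z)) = card (x - z)"
        by (rule card_image, rule inj_on_subset[OF down_set(2)[OF x]]) auto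
      moreover have "card (x - z) = Suc i - card z" using True fz x by (simp add: card_Diff_subset layer_iff)
      ultimately show ?thesis using e True x cz by (simp add: gz_def of_nat_diff)
    next
      case False
      have e2: "{a\<in>x. z \<subseteq> x - {a}} = {}" using False by auto
      show ?thesis using e[unfolded e2] False x by (simp add: gz_def)
    qed
  qed
qed

lemma dn_gz:
  assumes z: "z \<subseteq> {1..n}"
  shows "dn n i (gz n (Suc i) z) = fscale (real n - real i - real (card z)) (gz n i z) + (\<Sum>b\<in>z. gz n i (z - {b}))"
proof (rule ext)
  fix y
  have fz: "finite z" using z finite_subset by blast
  show "dn n i (gz n (Suc i) z) y = (fscale (real n - real i - real (card z)) (gz n i z) + (\<Sum>b\<in>z. gz n i (z - {b}))) y"
  proof (cases "y \<in> layer n i")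
    case False then show ?thesis by (simp add: dn_def gz_def sum_fun_apply)
  next
    case y: True
    have fy: "finite y" using layer_finite_elem[OF y] .
    have "dn n i (gz n (Suc i) z) y = (\<Sum>x\<in>{x\<in>layer n (Suc i). y \<subseteq> x}. if z \<subseteq> x then 1 else 0)"
      using y by (auto simp: dn_def gz_def intro!: sum.cong)
    also have "\<dots> = real (card {x\<in>{x\<in>layer n (Suc i). y \<subseteq> x}. z \<subseteq> x})"
      by (rule sum_indicator_card) simp
    also have "{x\<in>{x\<in>layer n (Suc i). y \<subseteq> x}. z \<subseteq> x} = {x\<in>layer n (Suc i). y \<subseteq> x \<and> z \<subseteq> x}" by auto
    also have "\<dots> = (\<lambda>a. insert a y) ` {a\<in>{1..n} - y. z \<subseteq> insert a y}" by (rule up_set(1)[OF y])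
    also have "card \<dots> = card {a\<in>{1..n} - y. z \<subseteq> insert a y}"
      by (rule card_image, rule inj_on_subset[OF up_set(2)[OF y]]) auto
    finally have L: "dn n i (gz n (Suc i) z) y = real (card {a\<in>{1..n} - y. z \<subseteq> insert a y})" .
    have "(\<Sum>b\<in>z. gz n i (z - {b})) y = (\<Sum>b\<in>z. if z - {b} \<subseteq> y then 1 else 0)"
      using y by (simp add: sum_fun_apply gz_def)
    also have "\<dots> = real (card {b\<in>z. z - {b} \<subseteq> y})"
      by (rule sum_indicator_card[OF fz])
    finally have R: "(\<Sum>b\<in>z. gz n i (z - {b})) y = real (card {b\<in>z. z - {b} \<subseteq> y})" .
    show ?thesis
    proof (cases "z \<subseteq> y")
      case True
      have "{a\<in>{1..n} - y. z \<subseteq> insert a y} = {1..n} - y" using True by auto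
      moreover have "card ({1..n} - y) = n - i" using y fy by (simp add: layer_iff card_Diff_subset)
      moreover have "{b\<in>z. z - {b} \<subseteq> y} = z" using True by auto
      moreover have "i \<le> n" using layer_card_le[OF y] .
      ultimately show ?thesis using L R True y by (simp add: gz_def of_nat_diff)
    next
      case False
      have "{a\<in>{1..n} - y. z \<subseteq> insert a y} = {b\<in>z. z - {b} \<subseteq> y}" using False z by auto
      then show ?thesis using L R False y by (simp add: gz_def)
    qed
  qed
qed

lemma up_span_image: "up n i ` fs.span G = fs.span (up n i ` G)"
  using module_hom.span_image[OF up_hom] by simp

lemma dn_span_image: "dn n i ` fs.span G = fs.span (dn n i ` G)"
  using module_hom.span_image[OF dn_hom] by simp

lemma up_Usp: "j \<le> Suc i \<Longrightarrow> up n i ` Usp n i j \<subseteq> Usp n (Suc i) j"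
  unfolding Usp_def up_span_image
proof (rule fs.span_minimal)
  assume j: "j \<le> Suc i"
  show "up n i ` {gz n i z |z. z \<subseteq> {1..n} \<and> card z \<le> j} \<subseteq> fs.span {gz n (Suc i) z |z. z \<subseteq> {1..n} \<and> card z \<le> j}"
  proof
    fix f assume "f \<in> up n i ` {gz n i z |z. z \<subseteq> {1..n} \<and> card z \<le> j}"
    then obtain z where z: "z \<subseteq> {1..n}" "card z \<le> j" and f: "f = up n i (gz n i z)" by auto
    have "f = fscale (real (Suc i) - real (card z)) (gz n (Suc i) z)"
      using f up_gz[OF z(1)] z(2) j by simp
    moreover have "gz n (Suc i) z \<in> fs.span {gz n (Suc i) z |z. z \<subseteq> {1..n} \<and> card z \<le> j}"
      by (rule fs.span_base) (use z in auto)
    ultimately show "f \<in> fs.span {gz n (Suc i) z |z. z \<subseteq> {1..n} \<and> card z \<le> j}"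
      using fs.span_scale by simp
  qed
qed simp

lemma up_Usp_eq: "j \<le> i \<Longrightarrow> up n i ` Usp n i j = Usp n (Suc i) j"
proof (rule equalityI)
  assume j: "j \<le> i"
  then show "up n i ` Usp n i j \<subseteq> Usp n (Suc i) j" using up_Usp by simp
  show "Usp n (Suc i) j \<subseteq> up n i ` Usp n i j"
    unfolding Usp_def up_span_image
  proof (rule fs.span_minimal)
    show "{gz n (Suc i) z |z. z \<subseteq> {1..n} \<and> card z \<le> j} \<subseteq> fs.span (up n i ` {gz n i z |z. z \<subseteq> {1..n} \<and> card z \<le> j})"
    proof
      fix f assume "f \<in> {gz n (Suc i) z |z. z \<subseteq> {1..n} \<and> card z \<le> j}"
      then obtain z where z: "z \<subseteq> {1..n}" "card z \<le> j" and f: "f = gz n (Suc i) z" by auto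
      define c where "c = real (Suc i) - real (card z)"
      have c: "c \<noteq> 0" using z j by (simp add: c_def)
      have "up n i (gz n i z) = fscale c f"
        using f up_gz[OF z(1)] z(2) j by (simp add: c_def)
      then have "f = fscale (1/c) (up n i (gz n i z))" using c by (simp add: fscale_eq)
      moreover have "up n i (gz n i z) \<in> fs.span (up n i ` {gz n i z |z. z \<subseteq> {1..n} \<and> card z \<le> j})"
        by (rule fs.span_base) (use z in auto)
      ultimately show "f \<in> fs.span (up n i ` {gz n i z |z. z \<subseteq> {1..n} \<and> card z \<le> j})"
        using fs.span_scale by simp
    qed
  qed simp
qed

lemma dn_Usp: "dn n i ` Usp n (Suc i) j \<subseteq> Usp n i j"
  unfolding Usp_def dn_span_image
proof (rule fs.span_minimal)
  show "dn n i ` {gz n (Suc i) z |z. z \<subseteq> {1..n} \<and> card z \<le> j} \<subseteq> fs.span {gz n i z |z. z \<subseteq> {1..n} \<and> card z \<le> j}"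
  proof
    fix f assume "f \<in> dn n i ` {gz n (Suc i) z |z. z \<subseteq> {1..n} \<and> card z \<le> j}"
    then obtain z where z: "z \<subseteq> {1..n}" "card z \<le> j" and f: "f = dn n i (gz n (Suc i) z)" by auto
    have fz: "finite z" using z finite_subset by blast
    let ?S = "fs.span {gz n i z |z. z \<subseteq> {1..n} \<and> card z \<le> j}"
    have "gz n i z \<in> ?S" by (rule fs.span_base) (use z in auto)
    moreover have "(\<Sum>b\<in>z. gz n i (z - {b})) \<in> ?S"
    proof (rule fs.span_sum)
      fix b assume "b \<in> z"
      have "card (z - {b}) \<le> j" by (rule le_trans[OF card_Diff1_le z(2)])
      then show "gz n i (z - {b}) \<in> ?S" by (intro fs.span_base) (use z in auto)
    qed
    ultimately show "f \<in> ?S" unfolding f dn_gz[OF z(1)] by (intro fs.span_add fs.span_scale) assumption+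
  qed
qed simp

lemma Usp_full: "i \<le> j \<Longrightarrow> Usp n i j = funs_on (layer n i)"
proof (rule equalityI)
  show "Usp n i j \<subseteq> funs_on (layer n i)" by (rule Usp_funs_on)
  assume ij: "i \<le> j"
  show "funs_on (layer n i) \<subseteq> Usp n i j"
  proof
    fix f assume f: "f \<in> funs_on (layer n i)"
    have "f = (\<Sum>x\<in>layer n i. fscale (f x) (gz n i x))"
    proof (rule ext)
      fix w
      show "f w = (\<Sum>x\<in>layer n i. fscale (f x) (gz n i x)) w"
      proof (cases "w \<in> layer n i")
        case False then show ?thesis using f by (simp add: sum_fun_apply gz_def funs_on_def)
      next
        case w: True
        have "(\<Sum>x\<in>layer n i. fscale (f x) (gz n i x)) w = (\<Sum>x\<in>layer n i. fscale (f x) (gz n i x) w)"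
          by (rule sum_fun_apply)
        also have "\<dots> = (\<Sum>x\<in>layer n i. if x = w then f w else 0)"
        proof (rule sum.cong[OF refl])
          fix x assume x: "x \<in> layer n i"
          have "x \<subseteq> w \<longleftrightarrow> x = w"
            using x w card_subset_eq[of w x] layer_finite_elem[OF w] by (auto simp: layer_iff)
          then show "fscale (f x) (gz n i x) w = (if x = w then f w else 0)"
            using w by (auto simp: gz_def)
        qed
        finally show ?thesis using w by simp
      qed
    qed
    moreover have "(\<Sum>x\<in>layer n i. fscale (f x) (gz n i x)) \<in> Usp n i j"
      unfolding Usp_def
      by (intro fs.span_sum fs.span_scale fs.span_base) (use ij in \<open>auto simp: layer_iff\<close>)
    ultimately show "f \<in> Usp n i j" by simp
  qed
qed


declare fscale_apply[simp del]

lemma span_funs_on: "G \<subseteq> funs_on X \<Longrightarrow> fs.span G \<subseteq> funs_on X"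
  by (rule fs.span_minimal) (auto simp: subspace_funs_on)

lemma orth_decomp:
  assumes "finite G" "G \<subseteq> funs_on (layer n i)"
  shows "\<exists>a\<in>fs.span G. \<forall>g\<in>G. lay_inner n i (f - a) g = 0"
  using assms
proof (induction G arbitrary: f rule: finite_induct)
  case empty
  then show ?case using fs.span_zero[of "{}"] by blast
next
  case (insert g G)
  have GF: "G \<subseteq> funs_on (layer n i)" and gF: "g \<in> funs_on (layer n i)" using insert.prems by auto
  obtain ag where ag: "ag \<in> fs.span G" "\<forall>h\<in>G. lay_inner n i (g - ag) h = 0"
    using insert.IH[OF GF] by blast
  obtain a where a: "a \<in> fs.span G" "\<forall>h\<in>G. lay_inner n i (f - a) h = 0"
    using insert.IH[OF GF] by blast
  define b where "b = g - ag"
  define w where "w = f - a"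
  have spG: "fs.span G \<subseteq> fs.span (insert g G)" by (rule fs.span_mono) auto
  have bF: "b \<in> funs_on (layer n i)"
    using gF span_funs_on[OF GF] ag(1) fs.subspace_diff[OF subspace_funs_on] unfolding b_def by blast
  show ?case
  proof (cases "lay_inner n i b b = 0")
    case True
    then have "b = 0" using lay_inner_self_eq0[OF bF] by simp
    then have "g \<in> fs.span G" using ag(1) by (simp add: b_def)
    then have ag0: "lay_inner n i (f - a) g = 0" using orth_span[OF a(2)] by simp
    show ?thesis
    proof (intro bexI[of _ a] ballI)
      fix h assume "h \<in> insert g G"
      then show "lay_inner n i (f - a) h = 0" using a(2) ag0 by blast
    qed (use a spG in blast)
  next
    case False
    define c where "c = lay_inner n i w b / lay_inner n i b b"
    define a' where "a' = a + fscale c b"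
    have g1: "g \<in> fs.span (insert g G)" by (rule fs.span_base) simp
    have g2: "ag \<in> fs.span (insert g G)" using spG ag(1) by blast
    have bsp: "b \<in> fs.span (insert g G)"
      unfolding b_def using g1 g2 by (rule fs.span_diff)
    have a'sp: "a' \<in> fs.span (insert g G)"
      unfolding a'_def using spG a(1) bsp by (intro fs.span_add fs.span_scale) auto
    have fa': "f - a' = w - fscale c b" by (simp add: a'_def w_def algebra_simps)
    have orthG: "\<forall>h\<in>G. lay_inner n i (f - a') h = 0"
      using a(2) ag(2) by (simp add: fa' lay_inner_diff_left lay_inner_scale_left w_def b_def)
    have "lay_inner n i (f - a') ag = 0" using orth_span[OF orthG ag(1)] .
    moreover have "lay_inner n i (f - a') b = 0"
      using False by (simp add: fa' lay_inner_diff_left lay_inner_scale_left c_def)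
    moreover have "g = ag + b" by (simp add: b_def)
    ultimately have "lay_inner n i (f - a') g = 0" by (simp add: lay_inner_add_right)
    show ?thesis
    proof (intro bexI[of _ a'] ballI)
      fix h assume "h \<in> insert g G"
      then show "lay_inner n i (f - a') h = 0" using orthG \<open>lay_inner n i (f - a') g = 0\<close> by blast
    qed (rule a'sp)
  qed
qed

lemma gens_funs_on: "{gz n i z |z. z \<subseteq> {1..n} \<and> card z \<le> j} \<subseteq> funs_on (layer n i)"
  using gz_funs_on by auto

lemma Usp_split:
  assumes g: "g \<in> Usp n i (Suc j)"
  shows "\<exists>a\<in>Usp n i j. g - a \<in> Vsp n i (Suc j)"
proof -
  obtain a where a: "a \<in> Usp n i j" "\<forall>h\<in>{gz n i z |z. z \<subseteq> {1..n} \<and> card z \<le> j}. lay_inner n i (g - a) h = 0"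
    using orth_decomp[OF gz_gens_finite gens_funs_on, of n i j g] unfolding Usp_def by blast
  have orth: "\<forall>h\<in>Usp n i j. lay_inner n i (g - a) h = 0"
    using orth_span[OF a(2)] unfolding Usp_def by blast
  have aU: "a \<in> Usp n i (Suc j)" using a(1) Usp_mono[of j "Suc j" n i] by auto
  have "g - a \<in> Usp n i (Suc j)" using g aU by (simp add: fs.subspace_diff subspace_Usp)
  moreover have "g - a \<in> funs_on (layer n i)" using calculation Usp_funs_on by blast
  ultimately show ?thesis using a(1) orth by (auto simp: Vsp_def orth_compl_def)
qed

lemma Usp_Vsp_inter:
  assumes "x \<in> Usp n i j" "x \<in> Vsp n i (Suc j)"
  shows "x = 0"
proof -
  have "x \<in> funs_on (layer n i)" "lay_inner n i x x = 0"
    using assms by (auto simp: Vsp_def orth_compl_def)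
  then show ?thesis using lay_inner_self_eq0 by blast
qed

lemma indep_union:
  assumes B1: "fs.independent B1" and fin: "finite B2"
  shows "fs.independent B2 \<Longrightarrow> (\<And>x. x \<in> fs.span B1 \<Longrightarrow> x \<in> fs.span B2 \<Longrightarrow> x = 0) \<Longrightarrow> fs.independent (B1 \<union> B2)"
  using fin
proof (induction B2 rule: finite_induct)
  case empty
  then show ?case using B1 by (metis Un_empty_right)
next
  case (insert b B)
  have indB: "fs.independent B" and bnot: "b \<notin> fs.span B"
    using insert.prems(1) insert.hyps(2) by (auto simp: fs.independent_insert)
  have spB: "fs.span B \<subseteq> fs.span (insert b B)" by (rule fs.span_mono) auto
  have bsp: "b \<in> fs.span (insert b B)" by (rule fs.span_base) simp
  have IH: "fs.independent (B1 \<union> B)"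
    using insert.IH[OF indB] insert.prems(2) spB by blast
  have b0: "b \<noteq> 0" using insert.prems(1) fs.dependent_zero by blast
  have "b \<notin> fs.span (B1 \<union> B)"
  proof
    assume "b \<in> fs.span (B1 \<union> B)"
    then obtain x y where xy: "b = x + y" "x \<in> fs.span B1" "y \<in> fs.span B"
      unfolding fs.span_Un by blast
    have "x = b - y" using xy by simp
    then have "x \<in> fs.span (insert b B)" using bsp spB xy(3) fs.span_diff by auto
    then have "x = 0" using insert.prems(2) xy(2) by blast
    then have "b \<in> fs.span B" using xy by simp
    then show False using bnot by simp
  qed
  moreover have "b \<notin> B1 \<union> B"
    using calculation fs.span_base by blast
  ultimately show ?case using IH by (simp add: fs.independent_insert)
qed

lemma funs_on_layer_sum:
  assumes f: "f \<in> funs_on (layer n i)"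
  shows "f = (\<Sum>x\<in>layer n i. fscale (f x) (gz n i x))"
proof (rule ext)
  fix w
  show "f w = (\<Sum>x\<in>layer n i. fscale (f x) (gz n i x)) w"
  proof (cases "w \<in> layer n i")
    case False then show ?thesis using f by (simp add: sum_fun_apply gz_def funs_on_def fscale_apply)
  next
    case w: True
    have "(\<Sum>x\<in>layer n i. fscale (f x) (gz n i x)) w = (\<Sum>x\<in>layer n i. fscale (f x) (gz n i x) w)"
      by (rule sum_fun_apply)
    also have "\<dots> = (\<Sum>x\<in>layer n i. if x = w then f w else 0)"
    proof (rule sum.cong[OF refl])
      fix x assume x: "x \<in> layer n i"
      have "x \<subseteq> w \<longleftrightarrow> x = w"
        using x w card_subset_eq[of w x] layer_finite_elem[OF w] by (auto simp: layer_iff)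
      then show "fscale (f x) (gz n i x) w = (if x = w then f w else 0)"
        using w by (auto simp: gz_def fscale_apply)
    qed
    finally show ?thesis using w by simp
  qed
qed

lemma gz_point: "x \<in> layer n i \<Longrightarrow> w \<in> layer n i \<Longrightarrow> gz n i x w = (if w = x then 1 else 0)"
  using card_subset_eq[of w x] layer_finite_elem[of w n i] by (auto simp: layer_iff gz_def)

lemma dim_funs_on_layer: "fdim (funs_on (layer n i)) = n choose i"
proof -
  let ?B = "gz n i ` layer n i"
  have inj: "inj_on (gz n i) (layer n i)"
  proof (rule inj_onI)
    fix x y assume "x \<in> layer n i" "y \<in> layer n i" "gz n i x = gz n i y"
    then have "gz n i x x = gz n i y x" by simp
    then show "x = y" using gz_point \<open>x \<in> layer n i\<close> \<open>y \<in> layer n i\<close> by (auto split: if_splits)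
  qed
  have ind: "fs.independent ?B"
    unfolding fs.dependent_def
  proof
    assume "\<exists>a\<in>?B. a \<in> fs.span (?B - {a})"
    then obtain x where x: "x \<in> layer n i" "gz n i x \<in> fs.span (?B - {gz n i x})" by blast
    have sub: "fs.subspace {f. f x = 0}" by (auto simp: fs.subspace_def fscale_apply)
    have "?B - {gz n i x} \<subseteq> {f. f x = 0}"
    proof
      fix f assume "f \<in> ?B - {gz n i x}"
      then obtain y where "y \<in> layer n i" "f = gz n i y" "y \<noteq> x" by auto
      then show "f \<in> {f. f x = 0}" using gz_point[of y n i x] x(1) by simp
    qed
    then have "fs.span (?B - {gz n i x}) \<subseteq> {f. f x = 0}" using fs.span_minimal sub by blast
    then have "gz n i x x = 0" using x(2) by auto
    then show False using gz_point[OF x(1) x(1)] by simp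
  qed
  have sp: "funs_on (layer n i) \<subseteq> fs.span ?B"
  proof
    fix f assume f: "f \<in> funs_on (layer n i)"
    have "(\<Sum>x\<in>layer n i. fscale (f x) (gz n i x)) \<in> fs.span ?B"
      by (intro fs.span_sum fs.span_scale fs.span_base) auto
    then show "f \<in> fs.span ?B" using funs_on_layer_sum[OF f] by simp
  qed
  have "?B \<subseteq> funs_on (layer n i)" using gz_funs_on by auto
  then have "card ?B = fdim (funs_on (layer n i))" using fs.basis_card_eq_dim sp ind by blast
  then show ?thesis using card_image[OF inj] card_layer by simp
qed

lemma indep_finite:
  assumes "fs.independent B" "B \<subseteq> funs_on (layer n i)"
  shows "finite B"
proof -
  have "funs_on (layer n i) = Usp n i i" using Usp_full by simp
  then have "B \<subseteq> fs.span {gz n i z |z. z \<subseteq> {1..n} \<and> card z \<le> i}" using assms(2) by (simp add: Usp_def)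
  then show ?thesis using fs.independent_span_bound[OF gz_gens_finite assms(1)] by blast
qed

lemma dim_sum_split:
  assumes V: "fs.subspace V" "V \<subseteq> funs_on (layer n i)"
    and W: "fs.subspace W" "W \<subseteq> funs_on (layer n i)"
    and U: "U \<subseteq> funs_on (layer n i)" "V \<subseteq> U" "W \<subseteq> U" "fs.subspace U"
    and split: "\<And>u. u \<in> U \<Longrightarrow> \<exists>v\<in>V. u - v \<in> W"
    and inter: "\<And>x. x \<in> V \<Longrightarrow> x \<in> W \<Longrightarrow> x = 0"
  shows "fdim U = fdim V + fdim W"
proof -
  obtain B1 where B1: "B1 \<subseteq> V" "fs.independent B1" "V \<subseteq> fs.span B1" "card B1 = fdim V"
    using fs.basis_exists by blast
  obtain B2 where B2: "B2 \<subseteq> W" "fs.independent B2" "W \<subseteq> fs.span B2" "card B2 = fdim W"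
    using fs.basis_exists by blast
  have f1: "finite B1" using indep_finite B1 V by blast
  have f2: "finite B2" using indep_finite B2 W by blast
  have s1: "fs.span B1 = V" using B1 fs.span_minimal[OF B1(1) V(1)] by blast
  have s2: "fs.span B2 = W" using B2 fs.span_minimal[OF B2(1) W(1)] by blast
  have ind: "fs.independent (B1 \<union> B2)"
    by (rule indep_union[OF B1(2) f2 B2(2)]) (use s1 s2 inter in auto)
  have sub: "B1 \<union> B2 \<subseteq> U" using B1 B2 U by auto
  have spU: "U \<subseteq> fs.span (B1 \<union> B2)"
  proof
    fix u assume "u \<in> U"
    then obtain v where v: "v \<in> V" "u - v \<in> W" using split by blast
    have "v \<in> fs.span (B1 \<union> B2)" using v(1) s1 fs.span_mono[of B1 "B1 \<union> B2"] by auto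
    moreover have "u - v \<in> fs.span (B1 \<union> B2)" using v(2) s2 fs.span_mono[of B2 "B1 \<union> B2"] by auto
    ultimately have "v + (u - v) \<in> fs.span (B1 \<union> B2)" by (rule fs.span_add)
    then show "u \<in> fs.span (B1 \<union> B2)" by simp
  qed
  have "card (B1 \<union> B2) = fdim U" using fs.basis_card_eq_dim[OF sub spU ind] .
  moreover have "B1 \<inter> B2 = {}"
  proof (rule ccontr)
    assume "B1 \<inter> B2 \<noteq> {}"
    then obtain x where "x \<in> B1" "x \<in> B2" by blast
    then have "x = 0" using inter B1(1) B2(1) by blast
    then show False using \<open>x \<in> B1\<close> B1(2) fs.dependent_zero by blast
  qed
  ultimately show ?thesis using card_Un_disjoint[OF f1 f2] B1(4) B2(4) by simp
qed

lemma dim_inj_image: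
  assumes h: "module_hom fscale fscale h" and V: "fs.subspace V" "V \<subseteq> funs_on (layer n i)"
    and inj: "inj_on h V"
  shows "fdim (h ` V) = fdim V"
proof -
  obtain B where B: "B \<subseteq> V" "fs.independent B" "V \<subseteq> fs.span B" "card B = fdim V"
    using fs.basis_exists by blast
  have s: "fs.span B = V" using B fs.span_minimal[OF B(1) V(1)] by blast
  have ind: "fs.independent (h ` B)"
    using module_hom.independent_injective_image[OF h B(2)] inj s by simp
  have sp: "h ` V \<subseteq> fs.span (h ` B)"
    using module_hom.span_image[OF h, of B] s by simp
  have "card (h ` B) = fdim (h ` V)"
    using fs.basis_card_eq_dim[OF _ sp ind] B(1) by blast
  moreover have "card (h ` B) = card B" using card_image inj_on_subset[OF inj B(1)] by blast
  ultimately show ?thesis using B(4) by simp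
qed


lemma lay_inner_cong_right:
  "(\<And>y. y \<in> layer n i \<Longrightarrow> h y = h' y) \<Longrightarrow> lay_inner n i f h = lay_inner n i f h'"
  by (simp add: lay_inner_def)

lemma funs_on_eqI:
  assumes "f \<in> funs_on (layer n i)" "g \<in> funs_on (layer n i)" "\<And>y. y \<in> layer n i \<Longrightarrow> f y = g y"
  shows "f = g"
proof
  fix y show "f y = g y" using assms by (cases "y \<in> layer n i") (auto simp: funs_on_def)
qed

lemma up_inj0:
  assumes m: "2 * m < n" and f: "f \<in> funs_on (layer n m)" and u: "up n m f = 0"
  shows "f = 0"
proof -
  have e0: "lay_inner n m f (dn n m (up n m f)) = 0"
    using up_adj[of n m f "up n m f"] u by simp
  have "lay_inner n m f f = 0"
  proof (cases m)
    case 0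
    have "lay_inner n m f (dn n m (up n m f)) = lay_inner n m f (fscale (real n) f)"
      by (rule lay_inner_cong_right) (use 0 commute_base in \<open>simp add: fscale_apply\<close>)
    then have "real n * lay_inner n m f f = 0" using e0 by (simp add: lay_inner_scale_right)
    then show ?thesis using m 0 by simp
  next
    case (Suc k)
    have "lay_inner n m f (dn n m (up n m f)) = lay_inner n m f (up n k (dn n k f) + fscale (real n - 2 * real (Suc k)) f)"
      by (rule lay_inner_cong_right) (use Suc commute_step in \<open>simp add: fscale_apply\<close>)
    also have "\<dots> = lay_inner n m f (up n k (dn n k f)) + (real n - 2 * real (Suc k)) * lay_inner n m f f"
      by (simp add: lay_inner_add_right lay_inner_scale_right)
    also have "lay_inner n m f (up n k (dn n k f)) = lay_inner n k (dn n k f) (dn n k f)"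
      using up_adj[of n k "dn n k f" f] Suc by (simp add: lay_inner_sym)
    finally have "lay_inner n k (dn n k f) (dn n k f) + (real n - 2 * real (Suc k)) * lay_inner n m f f = 0"
      using e0 by simp
    moreover have "lay_inner n k (dn n k f) (dn n k f) \<ge> 0" by (rule lay_inner_self_ge0)
    moreover have "lay_inner n m f f \<ge> 0" by (rule lay_inner_self_ge0)
    moreover have "real n - 2 * real (Suc k) > 0" using m Suc by simp
    ultimately show ?thesis
      by (smt (verit) mult_pos_pos)
  qed
  then show ?thesis using lay_inner_self_eq0[OF f] by simp
qed

lemma up_inj_on:
  assumes "2 * m < n"
  shows "inj_on (up n m) (funs_on (layer n m))"
proof -
  have "\<forall>x\<in>funs_on (layer n m). up n m x = 0 \<longrightarrow> x = 0" using up_inj0[OF assms] by blast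
  then show ?thesis using module_hom.inj_on_iff_eq_0[OF up_hom subspace_funs_on] by blast
qed

lemma dim_Usp_aux: "2 * (j + k) \<le> n + 1 \<Longrightarrow> fdim (Usp n (j + k) j) = n choose j"
proof (induction k)
  case 0
  then show ?case using Usp_full[of j j n] dim_funs_on_layer by simp
next
  case (Suc k)
  have m: "2 * (j + k) < n" using Suc.prems by simp
  have "Usp n (j + Suc k) j = up n (j + k) ` Usp n (j + k) j"
    using up_Usp_eq[of j "j + k" n] by simp
  moreover have "fdim (up n (j + k) ` Usp n (j + k) j) = fdim (Usp n (j + k) j)"
    by (rule dim_inj_image[OF up_hom subspace_Usp Usp_funs_on inj_on_subset[OF up_inj_on[OF m] Usp_funs_on]])
  ultimately show ?case using Suc by simp
qed

lemma dim_Usp: "j \<le> i \<Longrightarrow> 2 * i \<le> n + 1 \<Longrightarrow> fdim (Usp n i j) = n choose j"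
  using dim_Usp_aux[of j "i - j" n] by simp

lemma Vsp_Usp: "Vsp n i t \<subseteq> Usp n i t"
  by (auto simp: Vsp_def)

lemma dim_Vsp_Suc:
  assumes "Suc s \<le> i" "2 * i \<le> n + 1"
  shows "n choose (Suc s) = (n choose s) + fdim (Vsp n i (Suc s))"
proof -
  have "fdim (Usp n i (Suc s)) = fdim (Usp n i s) + fdim (Vsp n i (Suc s))"
  proof (rule dim_sum_split[OF subspace_Usp Usp_funs_on subspace_Vsp Vsp_funs_on Usp_funs_on _ _ subspace_Usp])
    show "Usp n i s \<subseteq> Usp n i (Suc s)" by (rule Usp_mono) simp
    show "Vsp n i (Suc s) \<subseteq> Usp n i (Suc s)" by (rule Vsp_Usp)
    show "\<And>u. u \<in> Usp n i (Suc s) \<Longrightarrow> \<exists>v\<in>Usp n i s. u - v \<in> Vsp n i (Suc s)" by (rule Usp_split)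
    show "\<And>x. x \<in> Usp n i s \<Longrightarrow> x \<in> Vsp n i (Suc s) \<Longrightarrow> x = 0" by (rule Usp_Vsp_inter)
  qed
  then show ?thesis using dim_Usp[of "Suc s" i n] dim_Usp[of s i n] assms by simp
qed

lemma dim_Vsp:
  assumes "t \<le> i" "2 * i \<le> n + 1"
  shows "int (fdim (Vsp n i t)) = int (n choose t) - (if t = 0 then 0 else int (n choose (t - 1)))"
proof (cases t)
  case 0
  then show ?thesis using dim_Usp[of 0 i n] assms by (simp add: Vsp_def)
next
  case (Suc s)
  then show ?thesis using dim_Vsp_Suc[of s i n] assms by simp
qed

lemma dn_orth_zero:
  assumes f: "f \<in> funs_on (layer n (Suc i))" and o: "\<forall>g\<in>Usp n (Suc i) i. lay_inner n (Suc i) f g = 0"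
  shows "dn n i f = 0"
proof -
  let ?h = "dn n i f"
  have "?h \<in> Usp n i i" using Usp_full[of i i n] dn_funs_on by simp
  then have "up n i ?h \<in> Usp n (Suc i) i" using up_Usp[of i i n] by auto
  then have "lay_inner n (Suc i) f (up n i ?h) = 0" using o by blast
  then have "lay_inner n i ?h ?h = 0" using up_adj[of n i ?h f] by (simp add: lay_inner_sym)
  then show ?thesis using lay_inner_self_eq0[OF dn_funs_on] by blast
qed

lemma up_Vsp:
  assumes t: "t \<le> i" and f: "f \<in> Vsp n i t"
  shows "up n i f \<in> Vsp n (Suc i) t"
proof (cases t)
  case 0
  then show ?thesis using f up_Usp[of 0 i n] by (auto simp: Vsp_def)
next
  case (Suc s)
  have fU: "f \<in> Usp n i t" and fo: "\<forall>g\<in>Usp n i s. lay_inner n i f g = 0"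
    using f Suc by (auto simp: Vsp_def orth_compl_def)
  have "up n i f \<in> Usp n (Suc i) t" using up_Usp[of t i n] t fU by auto
  moreover have "\<forall>g\<in>Usp n (Suc i) s. lay_inner n (Suc i) (up n i f) g = 0"
  proof
    fix g assume "g \<in> Usp n (Suc i) s"
    then have "dn n i g \<in> Usp n i s" using dn_Usp by blast
    then show "lay_inner n (Suc i) (up n i f) g = 0" using fo up_adj by simp
  qed
  ultimately show ?thesis using Suc up_funs_on by (auto simp: Vsp_def orth_compl_def)
qed

lemma dn_Vsp:
  assumes t: "t \<le> i" and f: "f \<in> Vsp n (Suc i) t"
  shows "dn n i f \<in> Vsp n i t"
proof (cases t)
  case 0
  then show ?thesis using f dn_Usp[of n i 0] by (auto simp: Vsp_def)
next
  case (Suc s)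
  have fU: "f \<in> Usp n (Suc i) t" and fo: "\<forall>g\<in>Usp n (Suc i) s. lay_inner n (Suc i) f g = 0"
    using f Suc by (auto simp: Vsp_def orth_compl_def)
  have "dn n i f \<in> Usp n i t" using dn_Usp fU by blast
  moreover have "\<forall>g\<in>Usp n i s. lay_inner n i (dn n i f) g = 0"
  proof
    fix g assume "g \<in> Usp n i s"
    then have "up n i g \<in> Usp n (Suc i) s" using up_Usp[of s i n] Suc t by auto
    then have "lay_inner n (Suc i) f (up n i g) = 0" using fo by blast
    then show "lay_inner n i (dn n i f) g = 0" using up_adj[of n i g f] by (simp add: lay_inner_sym)
  qed
  ultimately show ?thesis using Suc dn_funs_on by (auto simp: Vsp_def orth_compl_def)
qed


definition cc :: "nat \<Rightarrow> nat \<Rightarrow> nat \<Rightarrow> real" where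
  "cc n i t = (real i + 1 - real t) * (real n - real i - real t)"

lemma Vsp_funs: "f \<in> Vsp n i t \<Longrightarrow> f \<in> funs_on (layer n i)"
  using Vsp_funs_on by blast

lemma DU_Vsp_base:
  assumes f: "f \<in> Vsp n t t"
  shows "dn n t (up n t f) = fscale (cc n t t) f"
proof (rule funs_on_eqI[OF dn_funs_on])
  show "fscale (cc n t t) f \<in> funs_on (layer n t)"
    using Vsp_funs[OF f] fs.subspace_scale[OF subspace_funs_on] by blast
  fix y assume y: "y \<in> layer n t"
  show "dn n t (up n t f) y = fscale (cc n t t) f y"
  proof (cases t)
    case 0
    then show ?thesis using commute_base[of y n f] y by (simp add: cc_def fscale_apply)
  next
    case (Suc s)
    have "f \<in> funs_on (layer n (Suc s))" "\<forall>g\<in>Usp n (Suc s) s. lay_inner n (Suc s) f g = 0"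
      using f Suc by (auto simp: Vsp_def orth_compl_def)
    then have "dn n s f = 0" by (rule dn_orth_zero)
    then show ?thesis using commute_step[of y n s f] y Suc by (simp add: cc_def fscale_apply)
  qed
qed

lemma DU_Vsp_aux:
  "f \<in> Vsp n (t + k) t \<Longrightarrow> dn n (t + k) (up n (t + k) f) = fscale (cc n (t + k) t) f"
proof (induction k arbitrary: f)
  case 0
  then show ?case using DU_Vsp_base by simp
next
  case (Suc k)
  define i where "i = t + k"
  have f: "f \<in> Vsp n (Suc i) t" using Suc.prems by (simp add: i_def)
  have ti: "t \<le> i" by (simp add: i_def)
  define g where "g = dn n i f"
  have g: "g \<in> Vsp n i t" unfolding g_def by (rule dn_Vsp[OF ti f])
  have IH: "dn n i (up n i g) = fscale (cc n i t) g" using Suc.IH g by (simp add: i_def)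
  define h where "h = up n i g - fscale (cc n i t) f"
  have dh: "dn n i h = 0"
  proof -
    have "dn n i h = dn n i (up n i g) - fscale (cc n i t) (dn n i f)"
      unfolding h_def by (simp only: dn_diff dn_scale)
    also have "\<dots> = 0" using IH unfolding g_def by simp
    finally show ?thesis .
  qed
  have "g \<in> Usp n i t" using g Vsp_Usp by blast
  then have "up n i g \<in> Usp n (Suc i) t" using up_Usp[of t i n] ti by auto
  moreover have "fscale (cc n i t) f \<in> Usp n (Suc i) t"
    using f Vsp_Usp fs.subspace_scale[OF subspace_Usp] by blast
  ultimately have "h \<in> Usp n (Suc i) t" unfolding h_def by (simp add: fs.subspace_diff subspace_Usp)
  then obtain q where q: "h = up n i q" using up_Usp_eq[OF ti, of n] by blast
  have "lay_inner n (Suc i) h h = 0" using up_adj[of n i q h] dh q by simp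
  moreover have "h \<in> funs_on (layer n (Suc i))" using q up_funs_on by simp
  ultimately have "h = 0" using lay_inner_self_eq0 by blast
  then have ud: "up n i (dn n i f) = fscale (cc n i t) f" by (simp add: h_def g_def)
  have "dn n (Suc i) (up n (Suc i) f) = fscale (cc n (Suc i) t) f"
  proof (rule funs_on_eqI[OF dn_funs_on])
    show "fscale (cc n (Suc i) t) f \<in> funs_on (layer n (Suc i))"
      using Vsp_funs[OF f] fs.subspace_scale[OF subspace_funs_on] by blast
    fix y assume y: "y \<in> layer n (Suc i)"
    have "dn n (Suc i) (up n (Suc i) f) y = up n i (dn n i f) y + (real n - 2 * real (Suc i)) * f y"
      by (rule commute_step[OF y])
    also have "\<dots> = (cc n i t + (real n - 2 * real (Suc i))) * f y"
      using ud by (simp add: fscale_apply algebra_simps)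
    also have "cc n i t + (real n - 2 * real (Suc i)) = cc n (Suc i) t"
      by (simp add: cc_def algebra_simps)
    finally show "dn n (Suc i) (up n (Suc i) f) y = fscale (cc n (Suc i) t) f y" by (simp add: fscale_apply)
  qed
  then show ?case by (simp add: i_def)
qed

lemma DU_Vsp:
  assumes "t \<le> i" "f \<in> Vsp n i t"
  shows "dn n i (up n i f) = fscale (cc n i t) f"
proof -
  have "i = t + (i - t)" using assms(1) by simp
  then show ?thesis using DU_Vsp_aux[of f n t "i - t"] assms(2) by metis
qed

lemma DU_Usp: "j \<le> i \<Longrightarrow> a \<in> Usp n i j \<Longrightarrow> dn n i (up n i a) \<in> Usp n i j"
proof -
  assume "j \<le> i" "a \<in> Usp n i j"
  then have "up n i a \<in> Usp n (Suc i) j" using up_Usp[of j i n] by auto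
  then show ?thesis using dn_Usp[of n i j] by auto
qed

lemma fscale_diff_eq0:
  assumes "fscale c x = fscale d x" "c \<noteq> d"
  shows "x = 0"
  using assms fs.scale_cancel_right by blast

lemma ab_sum_eq_diff: "(P::'a::ab_group_add) + Q = R + S \<Longrightarrow> P - R = S - Q"
  by (simp add: algebra_simps)

lemma eigen_claim:
  assumes ti: "t \<le> i"
    and dist: "\<And>s. s \<le> i \<Longrightarrow> s \<noteq> t \<Longrightarrow> cc n i s \<noteq> cc n i t"
  shows "j \<le> i \<Longrightarrow> g \<in> Usp n i j \<Longrightarrow> dn n i (up n i g) = fscale (cc n i t) g
     \<Longrightarrow> (if t \<le> j then g \<in> Vsp n i t else g = 0)"
proof (induction j arbitrary: g)
  case 0
  have gV: "g \<in> Vsp n i 0" using 0 by (simp add: Vsp_def)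
  show ?case
  proof (cases "t = 0")
    case True then show ?thesis using gV by simp
  next
    case False
    have e1: "dn n i (up n i g) = fscale (cc n i 0) g" using DU_Vsp[OF _ gV] by simp
    have e2: "dn n i (up n i g) = fscale (cc n i t) g" using 0 by simp
    have ne: "cc n i 0 \<noteq> cc n i t" using dist[of 0] False by simp
    have "g = 0" by (rule fscale_diff_eq0[OF trans[OF e1[symmetric] e2] ne])
    then show ?thesis using False by simp
  qed
next
  case (Suc j)
  obtain a where a: "a \<in> Usp n i j" and b: "g - a \<in> Vsp n i (Suc j)"
    using Usp_split[OF Suc.prems(2)] by blast
  define b where "b = g - a"
  have gab: "g = a + b" by (simp add: b_def)
  have Db: "dn n i (up n i b) = fscale (cc n i (Suc j)) b"
    using DU_Vsp[OF Suc.prems(1)] b by (simp add: b_def)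
  have Da: "dn n i (up n i a) \<in> Usp n i j" using DU_Usp[of j i a n] Suc.prems(1) a by simp
  define x where "x = dn n i (up n i a) - fscale (cc n i t) a"
  have xU: "x \<in> Usp n i j"
    unfolding x_def using Da a by (simp add: fs.subspace_diff fs.subspace_scale subspace_Usp)
  have s1: "dn n i (up n i g) = dn n i (up n i a) + fscale (cc n i (Suc j)) b"
    unfolding gab up_add dn_add Db ..
  have s2: "dn n i (up n i g) = fscale (cc n i t) a + fscale (cc n i t) b"
    by (subst Suc.prems(3)) (simp only: gab fs.scale_right_distrib)
  have "dn n i (up n i a) - fscale (cc n i t) a = fscale (cc n i t) b - fscale (cc n i (Suc j)) b"
    using trans[OF s1[symmetric] s2] by (rule ab_sum_eq_diff)
  then have xe: "x = fscale (cc n i t - cc n i (Suc j)) b"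
    unfolding x_def fs.scale_left_diff_distrib .
  have "fscale (cc n i t - cc n i (Suc j)) b \<in> Vsp n i (Suc j)"
    using b fs.subspace_scale[OF subspace_Vsp] by (simp add: b_def)
  then have x0: "x = 0" using Usp_Vsp_inter[OF xU] xe by simp
  then have DaE: "dn n i (up n i a) = fscale (cc n i t) a" unfolding x_def by (simp only: right_minus_eq)
  have IH: "if t \<le> j then a \<in> Vsp n i t else a = 0"
    using Suc.IH[OF _ a DaE] Suc.prems(1) by simp
  show ?case
  proof (cases "t = Suc j")
    case True
    then have "a = 0" using IH by simp
    then show ?thesis using True b by (simp add: b_def)
  next
    case False
    have "cc n i t - cc n i (Suc j) \<noteq> 0" using dist[OF Suc.prems(1)] False by simp
    then have "b = 0" using xe x0 fs.scale_eq_0_iff by metis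
    then have ga: "g = a" by (simp only: gab add_0_right)
    show ?thesis
    proof (cases "t \<le> j")
      case True then show ?thesis using IH ga by simp
    next
      case False
      then show ?thesis using IH ga \<open>t \<noteq> Suc j\<close> by simp
    qed
  qed
qed


lemma symdiff_single1:
  assumes a: "(x - y) \<union> (y - x) = {a}" and ax: "a \<in> x"
  shows "y \<subseteq> x"
proof
  fix b assume b: "b \<in> y"
  show "b \<in> x"
  proof (rule ccontr)
    assume "b \<notin> x"
    then have "b \<in> (x - y) \<union> (y - x)" using b by simp
    then have "b = a" using a by simp
    then show False using ax \<open>b \<notin> x\<close> by simp
  qed
qed

lemma symdiff_single2:
  assumes a: "(x - y) \<union> (y - x) = {a}" and ax: "a \<notin> x"
  shows "x \<subseteq> y"
proof -
  have a': "(y - x) \<union> (x - y) = {a}" using a by (simp add: Un_commute)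
  have "a \<in> (x - y) \<union> (y - x)" using a by simp
  then have "a \<in> y" using ax by simp
  then show ?thesis using symdiff_single1[OF a'] by simp
qed

lemma cube_adj_single:
  assumes "cube_adj x y"
  obtains a where "(x - y) \<union> (y - x) = {a}"
proof -
  have "card ((x - y) \<union> (y - x)) = 1" using assms by (simp add: cube_adj_def)
  then show ?thesis using card_1_singletonE that by blast
qed

lemma cube_adj_sub:
  assumes x: "x \<in> layer n (Suc i)" and y: "y \<in> layer n i"
  shows "cube_adj x y \<longleftrightarrow> y \<subseteq> x"
proof -
  have fx: "finite x" and fy: "finite y" using x y layer_finite_elem by auto
  have cx: "card x = Suc i" and cy: "card y = i" using x y by (auto simp: layer_iff)
  show ?thesis
  proof
    assume "y \<subseteq> x"
    then have "(x - y) \<union> (y - x) = x - y" by auto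
    moreover have "card (x - y) = 1" using \<open>y \<subseteq> x\<close> fy cx cy by (simp add: card_Diff_subset)
    ultimately show "cube_adj x y" by (simp add: cube_adj_def)
  next
    assume "cube_adj x y"
    then obtain a where a: "(x - y) \<union> (y - x) = {a}" by (rule cube_adj_single)
    show "y \<subseteq> x"
    proof (cases "a \<in> x")
      case True
      then show ?thesis using symdiff_single1[OF a] by simp
    next
      case False
      then have "x \<subseteq> y" using symdiff_single2[OF a] by simp
      then have "card x \<le> card y" using card_mono fy by blast
      then show ?thesis using cx cy by simp
    qed
  qed
qed

lemma cube_adj_same:
  assumes x: "x \<in> layer n i" and y: "y \<in> layer n i"
  shows "\<not> cube_adj x y"
proof
  have fx: "finite x" and fy: "finite y" using x y layer_finite_elem by auto
  have cx: "card x = i" and cy: "card y = i" using x y by (auto simp: layer_iff)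
  assume "cube_adj x y"
  then obtain a where a: "(x - y) \<union> (y - x) = {a}" by (rule cube_adj_single)
  have "x = y"
  proof (cases "a \<in> x")
    case True
    then have "y \<subseteq> x" using symdiff_single1[OF a] by simp
    then show "x = y" using card_subset_eq[OF fx] cx cy by auto
  next
    case False
    then have "x \<subseteq> y" using symdiff_single2[OF a] by simp
    then show "x = y" using card_subset_eq[OF fy] cx cy by auto
  qed
  then show False using a by simp
qed

lemma cube_adj_sym: "cube_adj x y \<longleftrightarrow> cube_adj y x"
  by (simp add: cube_adj_def Un_commute)

lemma adj_op_eq:
  "adj_op (layer n i \<union> layer n (Suc i)) f = up n i f + dn n i f"
proof (rule ext)
  fix x
  let ?X = "layer n i \<union> layer n (Suc i)"
  show "adj_op ?X f x = (up n i f + dn n i f) x"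
  proof (cases "x \<in> layer n (Suc i)")
    case True
    have nx: "x \<notin> layer n i" using layer_disj[of "Suc i" i x n] True by simp
    have "{y\<in>?X. cube_adj x y} = {y\<in>layer n i. y \<subseteq> x}"
    proof (intro equalityI subsetI)
      fix y assume y: "y \<in> {y\<in>?X. cube_adj x y}"
      then have "y \<notin> layer n (Suc i)" using cube_adj_same[OF True] by blast
      then have "y \<in> layer n i" using y by blast
      then show "y \<in> {y\<in>layer n i. y \<subseteq> x}" using y cube_adj_sub[OF True] by blast
    next
      fix y assume y: "y \<in> {y\<in>layer n i. y \<subseteq> x}"
      then show "y \<in> {y\<in>?X. cube_adj x y}" using cube_adj_sub[OF True] by blast
    qed
    then show ?thesis using True nx by (simp add: adj_op_def up_def dn_def)
  next
    case False
    show ?thesis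
    proof (cases "x \<in> layer n i")
      case True
      have "{y\<in>?X. cube_adj x y} = {y\<in>layer n (Suc i). x \<subseteq> y}"
      proof (intro equalityI subsetI)
        fix y assume y: "y \<in> {y\<in>?X. cube_adj x y}"
        then have "y \<notin> layer n i" using cube_adj_same[OF True] by blast
        then have yl: "y \<in> layer n (Suc i)" using y by blast
        have "cube_adj y x" using y cube_adj_sym by blast
        then show "y \<in> {y\<in>layer n (Suc i). x \<subseteq> y}" using yl cube_adj_sub[OF yl True] by blast
      next
        fix y assume y: "y \<in> {y\<in>layer n (Suc i). x \<subseteq> y}"
        then have yl: "y \<in> layer n (Suc i)" by blast
        have "cube_adj y x" using y cube_adj_sub[OF yl True] by blast
        then show "y \<in> {y\<in>?X. cube_adj x y}" using yl cube_adj_sym by blast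
      qed
      then show ?thesis using True False by (simp add: adj_op_def up_def dn_def)
    next
      case False2: False
      then show ?thesis using False by (simp add: adj_op_def up_def dn_def)
    qed
  qed
qed

lemma restr_funs_on: "restr f X \<in> funs_on X"
  by (simp add: restr_def funs_on_def)

lemma funs_on_split:
  assumes "f \<in> funs_on (layer n i \<union> layer n (Suc i))"
  shows "f = restr f (layer n i) + restr f (layer n (Suc i))"
proof (rule ext)
  fix x show "f x = (restr f (layer n i) + restr f (layer n (Suc i))) x"
    using assms layer_disj[of i "Suc i" x n] by (auto simp: restr_def funs_on_def)
qed

lemma eig_iff:
  assumes f: "f \<in> funs_on (layer n i \<union> layer n (Suc i))"
  defines "P \<equiv> restr f (layer n i)" and "Q \<equiv> restr f (layer n (Suc i))"
  shows "adj_op (layer n i \<union> layer n (Suc i)) f = fscale lam f \<longleftrightarrow>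
    up n i P = fscale lam Q \<and> dn n i Q = fscale lam P"
proof -
  have uP: "up n i f = up n i P" by (rule up_cong) (simp add: P_def restr_def)
  have dQ: "dn n i f = dn n i Q" by (rule dn_cong) (simp add: Q_def restr_def)
  have fPQ: "f = P + Q" unfolding P_def Q_def by (rule funs_on_split[OF f])
  have A: "adj_op (layer n i \<union> layer n (Suc i)) f = up n i P + dn n i Q"
    using adj_op_eq uP dQ by simp
  have P0: "P x = 0" if "x \<notin> layer n i" for x using that by (simp add: P_def restr_def)
  have Q0: "Q x = 0" if "x \<notin> layer n (Suc i)" for x using that by (simp add: Q_def restr_def)
  have U0: "up n i P x = 0" if "x \<notin> layer n (Suc i)" for x using that by (simp add: up_def)
  have D0: "dn n i Q x = 0" if "x \<notin> layer n i" for x using that by (simp add: dn_def)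
  have disj: "x \<in> layer n i \<Longrightarrow> x \<notin> layer n (Suc i)" for x using layer_disj[of i "Suc i" x n] by simp
  show ?thesis
  proof
    assume E: "adj_op (layer n i \<union> layer n (Suc i)) f = fscale lam f"
    have Ex: "up n i P x + dn n i Q x = lam * (P x + Q x)" for x
      using fun_cong[OF E, of x] A fPQ by (simp add: fscale_apply)
    show "up n i P = fscale lam Q \<and> dn n i Q = fscale lam P"
    proof (intro conjI ext)
      fix x show "up n i P x = fscale lam Q x"
      proof (cases "x \<in> layer n (Suc i)")
        case True
        then have "x \<notin> layer n i" using disj by blast
        then show ?thesis using Ex[of x] D0[of x] P0[of x] by (simp add: fscale_apply)
      next
        case False
        then show ?thesis using U0[of x] Q0[of x] by (simp add: fscale_apply)
      qed
    next
      fix x show "dn n i Q x = fscale lam P x"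
      proof (cases "x \<in> layer n i")
        case True
        then have "x \<notin> layer n (Suc i)" using disj by blast
        then show ?thesis using Ex[of x] U0[of x] Q0[of x] by (simp add: fscale_apply)
      next
        case False
        then show ?thesis using D0[of x] P0[of x] by (simp add: fscale_apply)
      qed
    qed
  next
    assume "up n i P = fscale lam Q \<and> dn n i Q = fscale lam P"
    then have "up n i P + dn n i Q = fscale lam Q + fscale lam P" by simp
    also have "\<dots> = fscale lam f" using fPQ by (simp add: fs.scale_right_distrib add.commute)
    finally show "adj_op (layer n i \<union> layer n (Suc i)) f = fscale lam f" using A by simp
  qed
qed


definition hl :: "nat \<Rightarrow> nat \<Rightarrow> real \<Rightarrow> (nat set \<Rightarrow> real) \<Rightarrow> (nat set \<Rightarrow> real)" where
  "hl n i lam P = P + fscale (1 / lam) (up n i P)"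

lemma hl_hom: "module_hom fscale fscale (hl n i lam)"
  unfolding module_hom_iff
  by (intro conjI fs_module allI) (simp_all add: hl_def fun_eq_iff fscale_apply up_add up_scale algebra_simps)

lemma up_zero_off: "x \<notin> layer n (Suc i) \<Longrightarrow> up n i P x = 0"
  by (simp add: up_def)

lemma restr_hl_low:
  assumes P: "P \<in> funs_on (layer n i)"
  shows "restr (hl n i lam P) (layer n i) = P"
proof (rule ext)
  fix x show "restr (hl n i lam P) (layer n i) x = P x"
  proof (cases "x \<in> layer n i")
    case True
    then have "x \<notin> layer n (Suc i)" using layer_disj[of i "Suc i" x n] by simp
    then show ?thesis using True by (simp add: restr_def hl_def fscale_apply up_zero_off)
  next
    case False then show ?thesis using P by (simp add: restr_def funs_on_def)
  qed
qed

lemma restr_hl_high: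
  assumes P: "P \<in> funs_on (layer n i)"
  shows "restr (hl n i lam P) (layer n (Suc i)) = fscale (1 / lam) (up n i P)"
proof (rule ext)
  fix x show "restr (hl n i lam P) (layer n (Suc i)) x = fscale (1 / lam) (up n i P) x"
  proof (cases "x \<in> layer n (Suc i)")
    case True
    then have "x \<notin> layer n i" using layer_disj[of "Suc i" i x n] by simp
    then show ?thesis using True P by (simp add: restr_def hl_def fscale_apply funs_on_def)
  next
    case False then show ?thesis by (simp add: restr_def fscale_apply up_zero_off)
  qed
qed

lemma hl_funs_on:
  assumes P: "P \<in> funs_on (layer n i)"
  shows "hl n i lam P \<in> funs_on (layer n i \<union> layer n (Suc i))"
  using P by (auto simp: funs_on_def hl_def fscale_apply up_zero_off)

lemma cc_pos:
  assumes "t \<le> i" "2 * Suc i \<le> n"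
  shows "cc n i t > 0"
  using assms unfolding cc_def by (intro mult_pos_pos) auto

lemma cc_strict:
  assumes "s < t" "t \<le> i" "2 * Suc i \<le> n"
  shows "cc n i t < cc n i s"
  unfolding cc_def using assms by (intro mult_strict_mono) auto

lemma cc_dist:
  assumes "t \<le> i" "2 * Suc i \<le> n" "s \<le> i" "s \<noteq> t"
  shows "cc n i s \<noteq> cc n i t"
proof (cases "s < t")
  case True then show ?thesis using cc_strict[OF True assms(1,2)] by simp
next
  case False then have "t < s" using assms(4) by simp
  then show ?thesis using cc_strict[OF _ assms(3,2)] by fastforce
qed

locale setting =
  fixes n i :: nat and t :: nat and lam :: real
  assumes hi: "2 * Suc i \<le> n" and ti: "t \<le> i" and lam2: "lam * lam = cc n i t" and lam0: "lam \<noteq> 0"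
begin

abbreviation "X \<equiv> layer n i \<union> layer n (Suc i)"

lemma eig_to_hl:
  assumes f: "f \<in> eigsp X lam"
  shows "restr f (layer n i) \<in> Vsp n i t \<and> f = hl n i lam (restr f (layer n i))"
proof -
  define P where "P = restr f (layer n i)"
  define Q where "Q = restr f (layer n (Suc i))"
  have fX: "f \<in> funs_on X" and E: "adj_op X f = fscale lam f" using f by (auto simp: eigsp_def)
  have e: "up n i P = fscale lam Q \<and> dn n i Q = fscale lam P"
    using eig_iff[OF fX, of lam] E by (simp add: P_def Q_def)
  have Qe: "Q = fscale (1 / lam) (up n i P)"
    using e lam0 by (simp add: fs.scale_scale)
  have "dn n i (up n i P) = fscale lam (fscale lam P)"
    using e by (simp add: dn_scale)
  also have "\<dots> = fscale (cc n i t) P" using lam2 by (simp add: fs.scale_scale)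
  finally have DU: "dn n i (up n i P) = fscale (cc n i t) P" .
  have PU: "P \<in> Usp n i i" using Usp_full[of i i n] restr_funs_on by (simp add: P_def)
  have "if t \<le> i then P \<in> Vsp n i t else P = 0"
    by (rule eigen_claim[OF ti cc_dist[OF ti hi] order_refl PU DU]) auto
  then have PV: "P \<in> Vsp n i t" using ti by simp
  have "f = P + Q" unfolding P_def Q_def by (rule funs_on_split[OF fX])
  then have "f = hl n i lam P" using Qe by (simp add: hl_def)
  then show ?thesis using PV by (simp add: P_def)
qed

lemma hl_to_eig:
  assumes P: "P \<in> Vsp n i t"
  shows "hl n i lam P \<in> eigsp X lam"
proof -
  have PF: "P \<in> funs_on (layer n i)" using P Vsp_funs by blast
  define f where "f = hl n i lam P"
  have fX: "f \<in> funs_on X" unfolding f_def by (rule hl_funs_on[OF PF])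
  have rP: "restr f (layer n i) = P" unfolding f_def by (rule restr_hl_low[OF PF])
  have rQ: "restr f (layer n (Suc i)) = fscale (1 / lam) (up n i P)" unfolding f_def by (rule restr_hl_high[OF PF])
  have e1: "up n i P = fscale lam (fscale (1 / lam) (up n i P))" using lam0 by (simp add: fs.scale_scale)
  have "dn n i (fscale (1 / lam) (up n i P)) = fscale (1 / lam) (fscale (cc n i t) P)"
    using DU_Vsp[OF ti P] by (simp add: dn_scale)
  also have "\<dots> = fscale lam P"
    using lam0 lam2[symmetric] by (simp add: fs.scale_scale)
  finally have e2: "dn n i (fscale (1 / lam) (up n i P)) = fscale lam P" .
  have "adj_op X f = fscale lam f"
    using eig_iff[OF fX, of lam] e1 e2 rP rQ by simp
  then show ?thesis using fX by (simp add: eigsp_def f_def)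
qed

lemma eig_image: "eigsp X lam = hl n i lam ` Vsp n i t"
proof (intro equalityI subsetI)
  fix f assume "f \<in> eigsp X lam"
  then show "f \<in> hl n i lam ` Vsp n i t" using eig_to_hl by blast
next
  fix f assume "f \<in> hl n i lam ` Vsp n i t"
  then show "f \<in> eigsp X lam" using hl_to_eig by blast
qed

lemma eig_dim: "fdim (eigsp X lam) = fdim (Vsp n i t)"
proof -
  have inj: "inj_on (hl n i lam) (Vsp n i t)"
  proof (rule inj_onI)
    fix P P' assume "P \<in> Vsp n i t" "P' \<in> Vsp n i t" "hl n i lam P = hl n i lam P'"
    then show "P = P'" using restr_hl_low Vsp_funs by metis
  qed
  show ?thesis unfolding eig_image by (rule dim_inj_image[OF hl_hom subspace_Vsp Vsp_funs_on inj])
qed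

lemma sum_psubset:
  assumes x: "x \<in> layer n (Suc i)"
  shows "(\<Sum>y\<in>{y \<in> layer n i. y \<subset> x}. f y) = up n i (restr f (layer n i)) x"
proof -
  have "{y \<in> layer n i. y \<subset> x} = {y \<in> layer n i. y \<subseteq> x}"
    using x layer_disj[of i "Suc i" x n] by auto
  then show ?thesis using x by (simp add: up_def restr_def)
qed

lemma eig_char:
  "eigsp X lam = {f \<in> funs_on X. restr f (layer n i) \<in> Vsp n i t
      \<and> (\<forall>x \<in> layer n (Suc i). f x = (1 / lam) * (\<Sum>y\<in>{y \<in> layer n i. y \<subset> x}. f y))}"
proof (intro equalityI subsetI)
  fix f assume f: "f \<in> eigsp X lam"
  have fX: "f \<in> funs_on X" using f by (simp add: eigsp_def)
  have h: "restr f (layer n i) \<in> Vsp n i t" "f = hl n i lam (restr f (layer n i))" using eig_to_hl[OF f] by auto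
  have "\<forall>x \<in> layer n (Suc i). f x = (1 / lam) * (\<Sum>y\<in>{y \<in> layer n i. y \<subset> x}. f y)"
  proof
    fix x assume x: "x \<in> layer n (Suc i)"
    have "f x = restr f (layer n (Suc i)) x" using x by (simp add: restr_def)
    also have "\<dots> = fscale (1 / lam) (up n i (restr f (layer n i))) x"
      using restr_hl_high[of "restr f (layer n i)" n i lam, OF restr_funs_on] h(2) by metis
    finally show "f x = (1 / lam) * (\<Sum>y\<in>{y \<in> layer n i. y \<subset> x}. f y)"
      using sum_psubset[OF x] by (simp add: fscale_apply)
  qed
  then show "f \<in> {f \<in> funs_on X. restr f (layer n i) \<in> Vsp n i t
      \<and> (\<forall>x \<in> layer n (Suc i). f x = (1 / lam) * (\<Sum>y\<in>{y \<in> layer n i. y \<subset> x}. f y))}"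
    using fX h(1) by blast
next
  fix f assume "f \<in> {f \<in> funs_on X. restr f (layer n i) \<in> Vsp n i t
      \<and> (\<forall>x \<in> layer n (Suc i). f x = (1 / lam) * (\<Sum>y\<in>{y \<in> layer n i. y \<subset> x}. f y))}"
  then have fX: "f \<in> funs_on X" and PV: "restr f (layer n i) \<in> Vsp n i t"
    and fr: "\<forall>x \<in> layer n (Suc i). f x = (1 / lam) * (\<Sum>y\<in>{y \<in> layer n i. y \<subset> x}. f y)" by auto
  have "f = hl n i lam (restr f (layer n i))"
  proof (rule ext)
    fix x
    show "f x = hl n i lam (restr f (layer n i)) x"
    proof (cases "x \<in> layer n (Suc i)")
      case True
      then have "x \<notin> layer n i" using layer_disj[of "Suc i" i x n] by simp
      then show ?thesis using True fr sum_psubset[OF True, of f] by (simp add: hl_def fscale_apply restr_def)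
    next
      case False
      then show ?thesis using fX by (cases "x \<in> layer n i") (simp_all add: hl_def fscale_apply restr_def up_zero_off funs_on_def)
    qed
  qed
  then show "f \<in> eigsp X lam" using hl_to_eig[OF PV] by metis
qed

lemma eig_high: "f \<in> eigsp X lam \<Longrightarrow> restr f (layer n (Suc i)) \<in> Vsp n (Suc i) t"
proof -
  assume f: "f \<in> eigsp X lam"
  have h: "restr f (layer n i) \<in> Vsp n i t" "f = hl n i lam (restr f (layer n i))" using eig_to_hl[OF f] by auto
  have "restr f (layer n (Suc i)) = fscale (1 / lam) (up n i (restr f (layer n i)))"
    using restr_hl_high[of "restr f (layer n i)" n i lam, OF restr_funs_on] h(2) by metis
  moreover have "up n i (restr f (layer n i)) \<in> Vsp n (Suc i) t" by (rule up_Vsp[OF ti h(1)])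
  ultimately show ?thesis using fs.subspace_scale[OF subspace_Vsp] by simp
qed

end

lemma eig0_eq:
  assumes hi: "2 * Suc i \<le> n"
  shows "eigsp (layer n i \<union> layer n (Suc i)) 0 = Vsp n (Suc i) (Suc i)"
proof (intro equalityI subsetI)
  fix f assume f: "f \<in> eigsp (layer n i \<union> layer n (Suc i)) 0"
  define P where "P = restr f (layer n i)"
  define Q where "Q = restr f (layer n (Suc i))"
  have fX: "f \<in> funs_on (layer n i \<union> layer n (Suc i))" and E: "adj_op (layer n i \<union> layer n (Suc i)) f = fscale 0 f"
    using f by (auto simp: eigsp_def)
  have e: "up n i P = fscale 0 Q \<and> dn n i Q = fscale 0 P"
    using eig_iff[OF fX, of 0] E by (simp add: P_def Q_def)
  have "up n i P = 0" using e by simp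
  then have P0: "P = 0" by (intro up_inj0[of i n P]) (use hi in \<open>simp_all add: P_def restr_funs_on\<close>)
  have dQ: "dn n i Q = 0" using e by simp
  have QF: "Q \<in> funs_on (layer n (Suc i))" by (simp add: Q_def restr_funs_on)
  have "\<forall>g\<in>Usp n (Suc i) i. lay_inner n (Suc i) Q g = 0"
  proof
    fix g assume "g \<in> Usp n (Suc i) i"
    then obtain k where "g = up n i k" using up_Usp_eq[of i i n] by auto
    then show "lay_inner n (Suc i) Q g = 0" using up_adj[of n i k Q] dQ by (simp add: lay_inner_sym)
  qed
  then have QV: "Q \<in> Vsp n (Suc i) (Suc i)"
    using QF Usp_full[of "Suc i" "Suc i" n] by (simp add: Vsp_def orth_compl_def)
  have "f = P + Q" unfolding P_def Q_def by (rule funs_on_split[OF fX])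
  then show "f \<in> Vsp n (Suc i) (Suc i)" using P0 QV by simp
next
  fix f assume f: "f \<in> Vsp n (Suc i) (Suc i)"
  have fF: "f \<in> funs_on (layer n (Suc i))" using f Vsp_funs by blast
  have fX: "f \<in> funs_on (layer n i \<union> layer n (Suc i))" using fF by (simp add: funs_on_def)
  have P0: "restr f (layer n i) = 0"
  proof (rule ext)
    fix x show "restr f (layer n i) x = 0 x"
      using fF layer_disj[of i "Suc i" x n] by (simp add: restr_def funs_on_def)
  qed
  have Qf: "restr f (layer n (Suc i)) = f"
  proof (rule ext)
    fix x show "restr f (layer n (Suc i)) x = f x" using fF by (simp add: restr_def funs_on_def)
  qed
  have "\<forall>g\<in>Usp n (Suc i) i. lay_inner n (Suc i) f g = 0" using f by (simp add: Vsp_def orth_compl_def)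
  then have dQ: "dn n i f = 0" using dn_orth_zero[OF fF] by simp
  have "adj_op (layer n i \<union> layer n (Suc i)) f = fscale 0 f"
    using eig_iff[OF fX, of 0] P0 Qf dQ by simp
  then show "f \<in> eigsp (layer n i \<union> layer n (Suc i)) 0" using fX by (simp add: eigsp_def)
qed

lemma eig0_char:
  "{f \<in> funs_on (layer n i \<union> layer n (Suc i)). (\<forall>x \<in> layer n i. f x = 0) \<and> restr f (layer n (Suc i)) \<in> Vsp n (Suc i) (Suc i)}
   = Vsp n (Suc i) (Suc i)"
proof (intro equalityI subsetI)
  fix f assume f: "f \<in> {f \<in> funs_on (layer n i \<union> layer n (Suc i)). (\<forall>x \<in> layer n i. f x = 0) \<and> restr f (layer n (Suc i)) \<in> Vsp n (Suc i) (Suc i)}"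
  have "restr f (layer n (Suc i)) = f"
  proof (rule ext)
    fix x show "restr f (layer n (Suc i)) x = f x"
      using f by (cases "x \<in> layer n i") (auto simp: restr_def funs_on_def)
  qed
  then show "f \<in> Vsp n (Suc i) (Suc i)" using f by auto
next
  fix f assume f: "f \<in> Vsp n (Suc i) (Suc i)"
  have fF: "f \<in> funs_on (layer n (Suc i))" using f Vsp_funs by blast
  have Qf: "restr f (layer n (Suc i)) = f"
  proof (rule ext)
    fix x show "restr f (layer n (Suc i)) x = f x" using fF by (simp add: restr_def funs_on_def)
  qed
  have "\<forall>x \<in> layer n i. f x = 0" using fF layer_disj[of i "Suc i" _ n] by (auto simp: funs_on_def)
  moreover have "f \<in> funs_on (layer n i \<union> layer n (Suc i))" using fF by (simp add: funs_on_def)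
  ultimately show "f \<in> {f \<in> funs_on (layer n i \<union> layer n (Suc i)). (\<forall>x \<in> layer n i. f x = 0) \<and> restr f (layer n (Suc i)) \<in> Vsp n (Suc i) (Suc i)}"
    using f Qf by simp
qed


theorem corollary1p11:
  fixes n r :: nat
  assumes "1 \<le> r" and "2 * r \<le> n"
  defines "X \<equiv> layer n (r - 1) \<union> layer n r"
  defines "\<gamma> \<equiv> (\<lambda>t::nat. sqrt (real (r - t) * real (n - r - t + 1)))"
  defines "mult \<equiv> (\<lambda>t::nat. int (n choose t) - (if t = 0 then 0 else int (n choose (t - 1))))"
  shows
    \<comment> \<open>(i)\<close>
    "(\<forall>t \<le> r - 1. int (fdim (eigsp X (\<gamma> t))) = mult t
                 \<and> int (fdim (eigsp X (- \<gamma> t))) = mult t)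
     \<and> int (fdim (eigsp X 0)) = mult r
     \<comment> \<open>(ii)\<close>
     \<and> (\<forall>t \<le> r - 1. \<forall>lam \<in> {- \<gamma> t, \<gamma> t}.
          eigsp X lam =
            {f \<in> funs_on X. restr f (layer n (r - 1)) \<in> Vsp n (r - 1) t
               \<and> (\<forall>x \<in> layer n r. f x = (1 / lam) * (\<Sum>y\<in>{y \<in> layer n (r - 1). y \<subset> x}. f y))}
          \<and> (\<forall>f \<in> eigsp X lam. restr f (layer n r) \<in> Vsp n r t))
     \<comment> \<open>(iii)\<close>
     \<and> eigsp X 0 =
         {f \<in> funs_on X. (\<forall>x \<in> layer n (r - 1). f x = 0) \<and> restr f (layer n r) \<in> Vsp n r r}"
proof -
  obtain i where r: "r = Suc i" using assms(1) by (cases r) auto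
  have hi: "2 * Suc i \<le> n" using assms(2) r by simp
  have X: "X = layer n i \<union> layer n (Suc i)" by (simp add: X_def r)
  have gam: "\<gamma> t * \<gamma> t = cc n i t \<and> \<gamma> t \<noteq> 0" if t: "t \<le> i" for t
  proof -
    have a: "real (r - t) * real (n - r - t + 1) = cc n i t"
      using t hi r by (simp add: cc_def of_nat_diff algebra_simps)
    have pos: "cc n i t > 0" by (rule cc_pos[OF t hi])
    have "\<gamma> t = sqrt (real (r - t) * real (n - r - t + 1))" unfolding \<gamma>_def ..
    then have "\<gamma> t = sqrt (cc n i t)" by (simp only: a)
    then show ?thesis using pos by simp
  qed
  have setg: "setting n i t lam" if t: "t \<le> i" and lam: "lam \<in> {- \<gamma> t, \<gamma> t}" for t lam
  proof
    show "2 * Suc i \<le> n" by (rule hi)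
    show "t \<le> i" by (rule t)
    show "lam * lam = cc n i t" using gam[OF t] lam by auto
    show "lam \<noteq> 0" using gam[OF t] lam by auto
  qed
  have P1: "\<forall>t \<le> r - 1. int (fdim (eigsp X (\<gamma> t))) = mult t \<and> int (fdim (eigsp X (- \<gamma> t))) = mult t"
  proof (intro allI impI conjI)
    fix t assume "t \<le> r - 1"
    then have t: "t \<le> i" using r by simp
    have dV: "int (fdim (Vsp n i t)) = mult t" using dim_Vsp[OF t, of n] hi by (simp add: mult_def)
    show "int (fdim (eigsp X (\<gamma> t))) = mult t"
      using setting.eig_dim[OF setg[OF t, of "\<gamma> t"]] dV X by simp
    show "int (fdim (eigsp X (- \<gamma> t))) = mult t"
      using setting.eig_dim[OF setg[OF t, of "- \<gamma> t"]] dV X by simp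
  qed
  have P2: "int (fdim (eigsp X 0)) = mult r"
    using eig0_eq[OF hi] dim_Vsp[of "Suc i" "Suc i" n] hi X r by (simp add: mult_def)
  have P3: "\<forall>t \<le> r - 1. \<forall>lam \<in> {- \<gamma> t, \<gamma> t}.
          eigsp X lam =
            {f \<in> funs_on X. restr f (layer n (r - 1)) \<in> Vsp n (r - 1) t
               \<and> (\<forall>x \<in> layer n r. f x = (1 / lam) * (\<Sum>y\<in>{y \<in> layer n (r - 1). y \<subset> x}. f y))}
          \<and> (\<forall>f \<in> eigsp X lam. restr f (layer n r) \<in> Vsp n r t)"
  proof (intro allI impI ballI conjI)
    fix t lam assume "t \<le> r - 1" and lam: "lam \<in> {- \<gamma> t, \<gamma> t}"
    then have t: "t \<le> i" using r by simp
    interpret s: setting n i t lam by (rule setg[OF t lam])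
    show "eigsp X lam =
            {f \<in> funs_on X. restr f (layer n (r - 1)) \<in> Vsp n (r - 1) t
               \<and> (\<forall>x \<in> layer n r. f x = (1 / lam) * (\<Sum>y\<in>{y \<in> layer n (r - 1). y \<subset> x}. f y))}"
      using s.eig_char X r by simp
    fix f assume "f \<in> eigsp X lam"
    then show "restr f (layer n r) \<in> Vsp n r t" using s.eig_high X r by simp
  qed
  have P4: "eigsp X 0 = {f \<in> funs_on X. (\<forall>x \<in> layer n (r - 1). f x = 0) \<and> restr f (layer n r) \<in> Vsp n r r}"
    using eig0_eq[OF hi] eig0_char[of n i] X r by simp
  show ?thesis using P1 P2 P3 P4 by blast
qed


end
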